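(* Let $k\ge1$. Assume that $R_0,\dots,R_k$ (from BCG) have full column rank, that $\mu$ is not an eigenvalue of $T_1,\dots,T_k$, and that $\Delta^{(\mu)}_1,\dots,\Delta^{(\mu)}_{k+1}$ are nonsingular. Define $\Upsilon^{(\mu)}_j=\Phi_j^{-1}(\Delta^{(\mu)}_{j+1})^{-1}\Phi_j$ and $\Theta^{(\mu)}_j=(R_j^TR_j)\Upsilon^{(\mu)}_j$ for $j=0,\dots,k$. Then $\Upsilon^{(\mu)}_0=\mu^{-1}I_m$ and $$\Upsilon^{(\mu)}_k=\big[\mu(\Upsilon^{(\mu)}_{k-1}-\Upsilon_{k-1})+\Xi_k\big]^{-1}(\Upsilon^{(\mu)}_{k-1}-\Upsilon_{k-1}) =\big[\mu(\Theta^{(\mu)}_{k-1}-\Theta_{k-1})+R_k^TR_k\big]^{-1}(\Theta^{(\mu)}_{k-1}-\Theta_{k-1}),$$ where all displayed inverses exist.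
   Context: Let $A\in\mathbb{R}^{n\times n}$ be symmetric positive definite, let $B,X_0\in\mathbb{R}^{n\times m}$, and let $X=A^{-1}B$. The block conjugate gradient (BCG) algorithm sets $R_0=B-AX_0$, $P_0=R_0$, and for $k=1,2,\dots$: $\Upsilon_{k-1}=(P_{k-1}^TAP_{k-1})^{-1}(R_{k-1}^TR_{k-1})$, $X_k=X_{k-1}+P_{k-1}\Upsilon_{k-1}$, $R_k=R_{k-1}-AP_{k-1}\Upsilon_{k-1}$, $\Xi_k=(R_{k-1}^TR_{k-1})^{-1}(R_k^TR_k)$, $P_k=R_k+P_{k-1}\Xi_k$. Define $\mathfrak{E}_k=(X-X_k)^TA(X-X_k)$ and $\Theta_k=(R_k^TR_k)\Upsilon_k$. The block Lanczos algorithm below is started from the same $R_0=B-AX_0$. Let $A\in\mathbb{R}^{n\times n}$ be symmetric positive definite and $R_0\in\mathbb{R}^{n\times m}$ of full column rank. The block Lanczos algorithm started from $R_0$ is: $V_0=0$; $V_1\Gamma_0=R_0$ is a QR factorization ($V_1\in\mathbb{R}^{n\times m}$ with orthonormal columns, $\Gamma_0\in\mathbb{R}^{m\times m}$ upper triangular); for $k=1,2,\dots$: $W=AV_k-V_{k-1}\Gamma_{k-1}^T$, $\Omega_k=V_k^TW$, and $V_{k+1}\Gamma_k=W-V_k\Omega_k$ is a QR factorization. It is assumed that for all indices considered the block Krylov subspace $\mathrm{colspan}\{R_0,AR_0,\dots,A^{j-1}R_0\}$ has dimension $jm$, so that every $\Gamma_j$ is nonsingular and $V_i^TV_j=\delta_{ij}I_m$.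 Put $\mathcal V_k=(V_1,\dots,V_k)\in\mathbb{R}^{n\times km}$ and let $T_k\in\mathbb{R}^{km\times km}$ be the symmetric block tridiagonal matrix with diagonal blocks $\Omega_1,\dots,\Omega_k$, subdiagonal blocks $\Gamma_1,\dots,\Gamma_{k-1}$ and superdiagonal blocks $\Gamma_1^T,\dots,\Gamma_{k-1}^T$; one has $A\mathcal V_k=\mathcal V_kT_k+V_{k+1}\Gamma_kE_k^T$ and $T_k=\mathcal V_k^TA\mathcal V_k$ is symmetric positive definite. Define $\Delta_1=\Omega_1$, $\Delta_j=\Omega_j-\Gamma_{j-1}\Delta_{j-1}^{-1}\Gamma_{j-1}^T$ ($j\ge2$) (the diagonal blocks of the block $LDL^T$-type factorization of $T_k$; they are symmetric positive definite), $\Pi_j=\Gamma_j\Delta_j^{-1}$, $\Phi_0=\Gamma_0$ and $\Phi_j=\Pi_j\Phi_{j-1}$. Let $E_j=e_j\otimes I_m\in\mathbb{R}^{km\times m}$; for $M\in\mathbb{R}^{km\times km}$, $[M]_{i,j}$ denotes its $(i,j)$ block of size $m\times m$, and for $Y\in\mathbb{R}^{km\times m}$, $[Y]_j$ denotes its $j$th $m\times m$ block. Shifted quantities: for $\mu\in\mathbb{R}$ let $\overline\Delta^{(\mu)}_1=\Omega_1-\mu I_m$ and $\overline\Delta^{(\mu)}_{j+1}=\Omega_{j+1}-\mu I_m-\Gamma_j(\overline\Delta^{(\mu)}_j)^{-1}\Gamma_j^T$ (the diagonal blocks of the analogous factorization of $T_k-\mu I$). For $k\ge1$ let $\Omega^{(\mu)}_{k+1}=\mu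 I_m+\Gamma_k[(T_k-\mu I)^{-1}]_{k,k}\Gamma_k^T$ and let $T^{(\mu)}_{k+1}$ be $T_{k+1}$ with its last diagonal block $\Omega_{k+1}$ replaced by $\Omega^{(\mu)}_{k+1}$. Put $\Delta^{(\mu)}_1=\mu I_m$ and, for $k\ge1$, $\Delta^{(\mu)}_{k+1}=\Omega^{(\mu)}_{k+1}-\Gamma_k\Delta_k^{-1}\Gamma_k^T$ (the last diagonal block of the factorization of $T^{(\mu)}_{k+1}$). *)

theory Defs
  imports "Jordan_Normal_Form.Char_Poly"
begin

definition minv :: "real mat \<Rightarrow> real mat" where
  "minv M = (SOME N. N \<in> carrier_mat (dim_row M) (dim_row M) \<and> inverts_mat M N \<and> inverts_mat N M)"

definition sym_pos_def :: "nat \<Rightarrow> real mat \<Rightarrow> bool" where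
  "sym_pos_def n A \<longleftrightarrow> A \<in> carrier_mat n n \<and> A\<^sup>T = A \<and>
     (\<forall>v \<in> carrier_vec n. v \<noteq> 0\<^sub>v n \<longrightarrow> v \<bullet> (A *\<^sub>v v) > 0)"

definition full_col_rank :: "real mat \<Rightarrow> bool" where
  "full_col_rank M \<longleftrightarrow> (\<forall>v \<in> carrier_vec (dim_col M). M *\<^sub>v v = 0\<^sub>v (dim_row M) \<longrightarrow> v = 0\<^sub>v (dim_col M))"

definition krylov_mat :: "real mat \<Rightarrow> real mat \<Rightarrow> nat \<Rightarrow> real mat" where
  "krylov_mat A R0 j = mat (dim_row R0) (j * dim_col R0)
     (\<lambda>(i, c). ((A ^\<^sub>m (c div dim_col R0)) * R0) $$ (i, c mod dim_col R0))"

fun bcg :: "real mat \<Rightarrow> real mat \<Rightarrow> real mat \<Rightarrow> nat \<Rightarrow> real mat \<times> real mat \<times> real mat" where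
  "bcg A B X0 0 = (X0, B - A * X0, B - A * X0)"
| "bcg A B X0 (Suc k) =
     (let (X, R, P) = bcg A B X0 k;
          Ups = minv (P\<^sup>T * A * P) * (R\<^sup>T * R);
          X' = X + P * Ups;
          R' = R - A * P * Ups;
          Xi = minv (R\<^sup>T * R) * (R'\<^sup>T * R');
          P' = R' + P * Xi
      in (X', R', P'))"

definition bcg_X :: "real mat \<Rightarrow> real mat \<Rightarrow> real mat \<Rightarrow> nat \<Rightarrow> real mat" where
  "bcg_X A B X0 k = fst (bcg A B X0 k)"
definition bcg_R :: "real mat \<Rightarrow> real mat \<Rightarrow> real mat \<Rightarrow> nat \<Rightarrow> real mat" where
  "bcg_R A B X0 k = fst (snd (bcg A B X0 k))"
definition bcg_P :: "real mat \<Rightarrow> real mat \<Rightarrow> real mat \<Rightarrow> nat \<Rightarrow> real mat" where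
  "bcg_P A B X0 k = snd (snd (bcg A B X0 k))"

definition bcg_Ups :: "real mat \<Rightarrow> real mat \<Rightarrow> real mat \<Rightarrow> nat \<Rightarrow> real mat" where
  "bcg_Ups A B X0 j = minv ((bcg_P A B X0 j)\<^sup>T * A * bcg_P A B X0 j)
                      * ((bcg_R A B X0 j)\<^sup>T * bcg_R A B X0 j)"

definition bcg_Xi :: "real mat \<Rightarrow> real mat \<Rightarrow> real mat \<Rightarrow> nat \<Rightarrow> real mat" where
  "bcg_Xi A B X0 k = minv ((bcg_R A B X0 (k - 1))\<^sup>T * bcg_R A B X0 (k - 1))
                      * ((bcg_R A B X0 k)\<^sup>T * bcg_R A B X0 k)"

definition bcg_Theta :: "real mat \<Rightarrow> real mat \<Rightarrow> real mat \<Rightarrow> nat \<Rightarrow> real mat" where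
  "bcg_Theta A B X0 j = ((bcg_R A B X0 j)\<^sup>T * bcg_R A B X0 j) * bcg_Ups A B X0 j"

(* V, Gam, Om : nat => real mat are the Lanczos blocks V_j, Gamma_j, Omega_j (1-based as in the paper,
   Gamma_0 from the initial QR factorization, V_0 = 0). *)
definition is_block_lanczos ::
  "nat \<Rightarrow> nat \<Rightarrow> real mat \<Rightarrow> real mat \<Rightarrow> (nat \<Rightarrow> real mat) \<Rightarrow> (nat \<Rightarrow> real mat) \<Rightarrow> (nat \<Rightarrow> real mat) \<Rightarrow> nat \<Rightarrow> bool"
  where
  "is_block_lanczos n m A R0 V Gam Om K \<longleftrightarrow>
     V 0 = 0\<^sub>m n m \<and>
     V 1 \<in> carrier_mat n m \<and> Gam 0 \<in> carrier_mat m m \<and> upper_triangular (Gam 0) \<and>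
     (V 1)\<^sup>T * V 1 = 1\<^sub>m m \<and> V 1 * Gam 0 = R0 \<and>
     (\<forall>j. 1 \<le> j \<and> j \<le> K \<longrightarrow>
        (let W = A * V j - V (j - 1) * (Gam (j - 1))\<^sup>T in
           Om j = (V j)\<^sup>T * W \<and>
           V (j + 1) \<in> carrier_mat n m \<and> Gam j \<in> carrier_mat m m \<and> upper_triangular (Gam j) \<and>
           (V (j + 1))\<^sup>T * V (j + 1) = 1\<^sub>m m \<and>
           V (j + 1) * Gam j = W - V j * Om j))"

definition T_mat :: "nat \<Rightarrow> (nat \<Rightarrow> real mat) \<Rightarrow> (nat \<Rightarrow> real mat) \<Rightarrow> nat \<Rightarrow> real mat" where
  "T_mat m Gam Om k = mat (k * m) (k * m) (\<lambda>(i, j).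
     let bi = i div m; bj = j div m; a = i mod m; b = j mod m in
     if bi = bj then Om (bi + 1) $$ (a, b)
     else if bi = bj + 1 then Gam (bj + 1) $$ (a, b)
     else if bj = bi + 1 then (Gam (bi + 1))\<^sup>T $$ (a, b)
     else 0)"

(* (i,j) block (1-based) of size m x m of a matrix *)
definition blk :: "nat \<Rightarrow> real mat \<Rightarrow> nat \<Rightarrow> nat \<Rightarrow> real mat" where
  "blk m M i j = mat m m (\<lambda>(a, b). M $$ ((i - 1) * m + a, (j - 1) * m + b))"

fun Delta :: "(nat \<Rightarrow> real mat) \<Rightarrow> (nat \<Rightarrow> real mat) \<Rightarrow> nat \<Rightarrow> real mat" where
  "Delta Gam Om 0 = Om 0"  (* unused *)
| "Delta Gam Om (Suc 0) = Om 1"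
| "Delta Gam Om (Suc (Suc j)) =
     Om (j + 2) - Gam (j + 1) * minv (Delta Gam Om (j + 1)) * (Gam (j + 1))\<^sup>T"

definition Pi_blk :: "(nat \<Rightarrow> real mat) \<Rightarrow> (nat \<Rightarrow> real mat) \<Rightarrow> nat \<Rightarrow> real mat" where
  "Pi_blk Gam Om j = Gam j * minv (Delta Gam Om j)"

fun Phi :: "(nat \<Rightarrow> real mat) \<Rightarrow> (nat \<Rightarrow> real mat) \<Rightarrow> nat \<Rightarrow> real mat" where
  "Phi Gam Om 0 = Gam 0"
| "Phi Gam Om (Suc j) = Pi_blk Gam Om (Suc j) * Phi Gam Om j"

definition Om_mu :: "nat \<Rightarrow> (nat \<Rightarrow> real mat) \<Rightarrow> (nat \<Rightarrow> real mat) \<Rightarrow> real \<Rightarrow> nat \<Rightarrow> real mat" where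
  "Om_mu m Gam Om \<mu> k = \<mu> \<cdot>\<^sub>m 1\<^sub>m m
     + Gam k * blk m (minv (T_mat m Gam Om k - \<mu> \<cdot>\<^sub>m 1\<^sub>m (k * m))) k k * (Gam k)\<^sup>T"

definition Delta_mu :: "nat \<Rightarrow> (nat \<Rightarrow> real mat) \<Rightarrow> (nat \<Rightarrow> real mat) \<Rightarrow> real \<Rightarrow> nat \<Rightarrow> real mat" where
  "Delta_mu m Gam Om \<mu> j =
     (if j \<le> 1 then \<mu> \<cdot>\<^sub>m 1\<^sub>m m
      else Om_mu m Gam Om \<mu> (j - 1) - Gam (j - 1) * minv (Delta Gam Om (j - 1)) * (Gam (j - 1))\<^sup>T)"

definition Ups_mu :: "nat \<Rightarrow> (nat \<Rightarrow> real mat) \<Rightarrow> (nat \<Rightarrow> real mat) \<Rightarrow> real \<Rightarrow> nat \<Rightarrow> real mat" where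
  "Ups_mu m Gam Om \<mu> j = minv (Phi Gam Om j) * minv (Delta_mu m Gam Om \<mu> (j + 1)) * Phi Gam Om j"

end

theory Submission
  imports Defs
begin


lemma inv_right_to_minv:
  fixes A B :: "real mat"
  assumes A: "A \<in> carrier_mat m m" and B: "B \<in> carrier_mat m m" and AB: "A * B = 1\<^sub>m m"
  shows "invertible_mat A" "minv A = B"
proof -
  have BA: "B * A = 1\<^sub>m m" by (rule mat_mult_left_right_inverse[OF A B AB])
  show "invertible_mat A" unfolding invertible_mat_def inverts_mat_def square_mat.simps
    using A B AB BA by (intro conjI exI[of _ B]) auto
  have P: "B \<in> carrier_mat (dim_row A) (dim_row A) \<and> inverts_mat A B \<and> inverts_mat B A"
    using A B AB BA unfolding inverts_mat_def by auto
  have "\<And>N. N \<in> carrier_mat (dim_row A) (dim_row A) \<and> inverts_mat A N \<and> inverts_mat N A \<Longrightarrow> N = B"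
  proof -
    fix N assume N: "N \<in> carrier_mat (dim_row A) (dim_row A) \<and> inverts_mat A N \<and> inverts_mat N A"
    hence N': "N \<in> carrier_mat m m" "N * A = 1\<^sub>m m" using A unfolding inverts_mat_def by auto
    have "N = N * (A * B)" using N' by (simp add: AB)
    also have "\<dots> = (N * A) * B" using N' A B by (metis assoc_mult_mat)
    also have "\<dots> = B" using N' B by simp
    finally show "N = B" .
  qed
  then show "minv A = B" unfolding minv_def using P by (rule some_equality[rotated])
qed

lemma minv_props:
  fixes A :: "real mat"
  assumes A: "A \<in> carrier_mat m m" and inv: "invertible_mat A"
  shows "minv A \<in> carrier_mat m m" "A * minv A = 1\<^sub>m m" "minv A * A = 1\<^sub>m m"
proof -
  from inv obtain B where AB: "A * B = 1\<^sub>m (dim_row A)" and BA: "B * A = 1\<^sub>m (dim_row B)"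
    unfolding invertible_mat_def inverts_mat_def by auto
  have "dim_col B = m" using AB A by (metis dim_col_mat(1) index_mult_mat(3) index_one_mat(3) carrier_matD(1))
  moreover have "dim_row B = m" using BA A by (metis index_mult_mat(3) index_one_mat(3) carrier_matD(2))
  ultimately have B: "B \<in> carrier_mat m m" by auto
  have AB': "A * B = 1\<^sub>m m" using AB A by auto
  from inv_right_to_minv[OF A B AB'] have "minv A = B" by simp
  with B AB' BA show "minv A \<in> carrier_mat m m" "A * minv A = 1\<^sub>m m" "minv A * A = 1\<^sub>m m"
    using B by auto
qed

lemma inv_det:
  fixes A :: "real mat"
  assumes A: "A \<in> carrier_mat m m"
  shows "invertible_mat A \<longleftrightarrow> det A \<noteq> 0"
proof
  assume "invertible_mat A"
  from minv_props[OF A this] have "det A * det (minv A) = 1"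
    using det_mult[OF A, of "minv A"] by (metis det_one)
  then show "det A \<noteq> 0" by auto
next
  assume "det A \<noteq> 0"
  from det_non_zero_imp_unit[OF A this, of "()"] obtain B where
    B: "B \<in> carrier_mat m m" "A * B = 1\<^sub>m m"
    unfolding Units_def ring_mat_def by auto
  from inv_right_to_minv[OF A B] show "invertible_mat A" by simp
qed

lemma inv_kernel:
  fixes A :: "real mat"
  assumes A: "A \<in> carrier_mat m m" and ker: "\<And>v. v \<in> carrier_vec m \<Longrightarrow> A *\<^sub>v v = 0\<^sub>v m \<Longrightarrow> v = 0\<^sub>v m"
  shows "invertible_mat A"
  unfolding inv_det[OF A] det_0_iff_vec_prod_zero[OF A] using ker by auto

lemma assoc2: "dim_col (A::'a::semiring_0 mat) = dim_row B \<Longrightarrow> dim_col B = dim_row C \<Longrightarrow> A * B * C = A * (B * C)"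
  by (rule assoc_mult_mat[of A "dim_row A" "dim_col A" B "dim_col B" C "dim_col C"]) auto

lemma cancel1: "A * B = 1\<^sub>m k \<Longrightarrow> dim_col (A::'a::semiring_1 mat) = dim_row B \<Longrightarrow> dim_col B = dim_row C \<Longrightarrow> A * (B * C) = C"
proof -
  assume h: "A * B = 1\<^sub>m k" "dim_col A = dim_row B" "dim_col B = dim_row C"
  have "A * (B * C) = (A * B) * C"
    using assoc2[OF h(2,3)] by simp
  also have "\<dots> = C"
  proof -
    have "dim_col (A * B) = k" using h(1) by simp
    then have "dim_row C = k" using h(3) by simp
    then show ?thesis using h(1) by simp
  qed
  finally show ?thesis .
qed

lemma dl_add: "dim_col (A::'a::semiring_0 mat) = dim_row B \<Longrightarrow> dim_row B = dim_row C \<Longrightarrow> dim_col B = dim_col C \<Longrightarrow> A * (B + C) = A * B + A * C"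
  by (rule mult_add_distrib_mat[of A "dim_row A" "dim_col A" B "dim_col B"]) auto
lemma dr_add: "dim_row (A::'a::semiring_0 mat) = dim_row B \<Longrightarrow> dim_col A = dim_col B \<Longrightarrow> dim_col B = dim_row C \<Longrightarrow> (A + B) * C = A * C + B * C"
  by (rule add_mult_distrib_mat[of A "dim_row A" "dim_col A" B C "dim_col C"]) auto
lemma dl_minus: "dim_col (A::'a::ring mat) = dim_row B \<Longrightarrow> dim_row B = dim_row C \<Longrightarrow> dim_col B = dim_col C \<Longrightarrow> A * (B - C) = A * B - A * C"
  by (rule mult_minus_distrib_mat[of A "dim_row A" "dim_col A" B "dim_col B"]) auto
lemma dr_minus: "dim_row (A::'a::ring mat) = dim_row B \<Longrightarrow> dim_col A = dim_col B \<Longrightarrow> dim_col B = dim_row C \<Longrightarrow> (A - B) * C = A * C - B * C"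
  by (rule minus_mult_distrib_mat[of A "dim_row A" "dim_col A" B C "dim_col C"]) auto
lemma tr_mult: "dim_col (A::'a::comm_semiring_0 mat) = dim_row B \<Longrightarrow> (A * B)\<^sup>T = B\<^sup>T * A\<^sup>T"
  by (rule transpose_mult[of A "dim_row A" "dim_col A" B "dim_col B"]) auto
lemma tr_add: "dim_row (A::'a::ab_semigroup_add mat) = dim_row B \<Longrightarrow> dim_col A = dim_col B \<Longrightarrow> (A + B)\<^sup>T = A\<^sup>T + B\<^sup>T"
  by (rule eq_matI) auto
lemma tr_minus: "dim_row (A::'a::ab_group_add mat) = dim_row B \<Longrightarrow> dim_col A = dim_col B \<Longrightarrow> (A - B)\<^sup>T = A\<^sup>T - B\<^sup>T"
  by (rule eq_matI) auto
lemma tr_smult: "(c \<cdot>\<^sub>m (A::'a::comm_semiring_0 mat))\<^sup>T = c \<cdot>\<^sub>m A\<^sup>T"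
  by (rule eq_matI) auto
lemma sm_l: "dim_col (A::'a::comm_semiring_0 mat) = dim_row B \<Longrightarrow> (c \<cdot>\<^sub>m A) * B = c \<cdot>\<^sub>m (A * B)"
  by (rule eq_matI) auto
lemma sm_r: "dim_col (A::'a::comm_semiring_0 mat) = dim_row B \<Longrightarrow> A * (c \<cdot>\<^sub>m B) = c \<cdot>\<^sub>m (A * B)"
  by (rule eq_matI) auto

lemmas mm = assoc2 dl_add dr_add dl_minus dr_minus tr_mult tr_add tr_minus tr_smult sm_l sm_r

lemma inv_mult:
  fixes A B :: "real mat"
  assumes A: "A \<in> carrier_mat m m" and B: "B \<in> carrier_mat m m"
    and iA: "invertible_mat A" and iB: "invertible_mat B"
  shows "invertible_mat (A * B)" "minv (A * B) = minv B * minv A"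
proof -
  note a = minv_props[OF A iA] and b = minv_props[OF B iB]
  have e: "(A * B) * (minv B * minv A) = 1\<^sub>m m"
    using A B a b by (simp add: mm cancel1[OF b(2)])
  from inv_right_to_minv[OF _ _ e] A B a b
  show "invertible_mat (A * B)" "minv (A * B) = minv B * minv A" by auto
qed

lemma inv_transpose:
  fixes A :: "real mat"
  assumes A: "A \<in> carrier_mat m m" and iA: "invertible_mat A"
  shows "invertible_mat (A\<^sup>T)" "minv (A\<^sup>T) = (minv A)\<^sup>T"
proof -
  note a = minv_props[OF A iA]
  have e: "A\<^sup>T * (minv A)\<^sup>T = 1\<^sub>m m"
    using transpose_mult[OF a(1) A] a by simp
  from inv_right_to_minv[OF _ _ e] A a
  show "invertible_mat (A\<^sup>T)" "minv (A\<^sup>T) = (minv A)\<^sup>T" by auto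
qed

lemma inv_minv:
  fixes A :: "real mat"
  assumes A: "A \<in> carrier_mat m m" and iA: "invertible_mat A"
  shows "invertible_mat (minv A)" "minv (minv A) = A"
proof -
  note a = minv_props[OF A iA]
  from inv_right_to_minv[OF a(1) A a(3)]
  show "invertible_mat (minv A)" "minv (minv A) = A" by auto
qed

lemma inv_factors:
  fixes A B :: "real mat"
  assumes A: "A \<in> carrier_mat m m" and B: "B \<in> carrier_mat m m"
    and iAB: "invertible_mat (A * B)"
  shows "invertible_mat A" "invertible_mat B"
proof -
  have "det (A * B) \<noteq> 0" using iAB inv_det[of "A * B" m] A B by auto
  then have "det A \<noteq> 0" "det B \<noteq> 0" using det_mult[OF A B] by auto
  then show "invertible_mat A" "invertible_mat B" using inv_det A B by auto
qed


lemma add_rearr: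
  fixes X Y Z W :: "real mat"
  assumes c: "X \<in> carrier_mat a b" "Y \<in> carrier_mat a b" "Z \<in> carrier_mat a b" "W \<in> carrier_mat a b"
    and e: "X = (Y - Z) - W"
  shows "Y = X + W + Z"
proof (rule eq_matI)
  fix i j assume ij: "i < dim_row (X + W + Z)" "j < dim_col (X + W + Z)"
  then have ij': "i < a" "j < b" using c by auto
  have "X $$ (i, j) = ((Y - Z) - W) $$ (i, j)" using e by simp
  then show "Y $$ (i, j) = (X + W + Z) $$ (i, j)" using ij' c by simp
qed (use c in auto)

lemma smult_mat_vec: "v \<in> carrier_vec (dim_col Y) \<Longrightarrow> (c \<cdot>\<^sub>m (Y :: real mat)) *\<^sub>v v = c \<cdot>\<^sub>v (Y *\<^sub>v v)"
  by (rule eq_vecI) (auto simp: scalar_prod_def sum_distrib_left intro!: sum.cong)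

lemma kernel_inv:
  fixes X Vm M :: "real mat"
  assumes X: "X = c \<cdot>\<^sub>m (Vm * M)" and c: "c \<noteq> 0" and fr: "full_col_rank X"
    and Vm: "Vm \<in> carrier_mat n m" and M: "M \<in> carrier_mat m m"
  shows "invertible_mat M"
proof (rule inv_kernel[OF M])
  fix v :: "real vec" assume v: "v \<in> carrier_vec m" and Mv: "M *\<^sub>v v = 0\<^sub>v m"
  have dX: "dim_col X = m" "dim_row X = n" using X Vm M by auto
  have "X *\<^sub>v v = c \<cdot>\<^sub>v (Vm *\<^sub>v (M *\<^sub>v v))"
    unfolding X using Vm M v by (subst smult_mat_vec) auto
  also have "\<dots> = 0\<^sub>v n" unfolding Mv using Vm by auto
  finally have "X *\<^sub>v v = 0\<^sub>v (dim_row X)" using dX by simp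
  then show "v = 0\<^sub>v m" using fr v dX unfolding full_col_rank_def by auto
qed

lemma posdef_inv:
  fixes A Z Y :: "real mat"
  assumes A: "sym_pos_def n A" and Z: "Z \<in> carrier_mat n m" and Y: "Y \<in> carrier_mat m n"
    and YZ: "Y * Z = 1\<^sub>m m"
  shows "invertible_mat (Z\<^sup>T * (A * Z))"
proof (rule inv_kernel)
  have Ac: "A \<in> carrier_mat n n" using A unfolding sym_pos_def_def by auto
  show "Z\<^sup>T * (A * Z) \<in> carrier_mat m m" using Ac Z by auto
  fix v :: "real vec" assume v: "v \<in> carrier_vec m" and Mv: "(Z\<^sup>T * (A * Z)) *\<^sub>v v = 0\<^sub>v m"
  define w where "w = Z *\<^sub>v v"
  have w: "w \<in> carrier_vec n" unfolding w_def using Z v by auto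
  have Aw: "A *\<^sub>v w \<in> carrier_vec n" using Ac w by auto
  have "(Z\<^sup>T * (A * Z)) *\<^sub>v v = Z\<^sup>T *\<^sub>v (A *\<^sub>v w)"
    unfolding w_def using Z Ac v by (simp add: assoc_mult_mat_vec[of _ m n _ m])
  then have "Z\<^sup>T *\<^sub>v (A *\<^sub>v w) = 0\<^sub>v m" using Mv by simp
  then have "(Z\<^sup>T *\<^sub>v (A *\<^sub>v w)) \<bullet> v = 0" using v by simp
  then have "(A *\<^sub>v w) \<bullet> w = 0"
    unfolding w_def using transpose_vec_mult_scalar[OF Z v Aw] by (simp add: w_def)
  then have "w \<bullet> (A *\<^sub>v w) = 0" using comm_scalar_prod[OF Aw w] by simp
  then have w0: "w = 0\<^sub>v n" using A w unfolding sym_pos_def_def by force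
  have "v = (Y * Z) *\<^sub>v v" using YZ v by simp
  also have "\<dots> = Y *\<^sub>v w" unfolding w_def using Y Z v by simp
  also have "\<dots> = 0\<^sub>v m" using w0 Y by (intro eq_vecI) auto
  finally show "v = 0\<^sub>v m" .
qed

lemma add4:
  fixes X1 X2 X3 X4 :: "real mat"
  assumes c: "X1 \<in> carrier_mat a b" "X2 \<in> carrier_mat a b" "X3 \<in> carrier_mat a b" "X4 \<in> carrier_mat a b"
  shows "(X1 + X2 + X3) - (X3 + X4) = (X2 - X4) + X1"
  by (rule eq_matI) (use c in auto)

lemma zero_minus_zero: "0\<^sub>m a b - 0\<^sub>m a b = (0\<^sub>m a b :: real mat)"
  by (rule eq_matI) auto

fun Zv :: "(nat \<Rightarrow> real mat) \<Rightarrow> (nat \<Rightarrow> real mat) \<Rightarrow> (nat \<Rightarrow> real mat) \<Rightarrow> nat \<Rightarrow> real mat" where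
  "Zv V Gam Om 0 = V 0"
| "Zv V Gam Om (Suc 0) = V 1"
| "Zv V Gam Om (Suc (Suc i)) = V (i + 2) - Zv V Gam Om (Suc i) * (Pi_blk Gam Om (i + 1))\<^sup>T"

lemma Zv_Suc: "1 \<le> i \<Longrightarrow> Zv V Gam Om (i + 1) = V (i + 1) - Zv V Gam Om i * (Pi_blk Gam Om i)\<^sup>T"
  by (cases i) auto

lemma Delta_Suc: "1 \<le> i \<Longrightarrow> Delta Gam Om (i + 1) = Om (i + 1) - Gam i * minv (Delta Gam Om i) * (Gam i)\<^sup>T"
  by (cases i) auto

lemma sm_one: "1 \<cdot>\<^sub>m (X :: real mat) = X"
  by (rule eq_matI) auto

lemma smsm: "c \<cdot>\<^sub>m (d \<cdot>\<^sub>m (X :: real mat)) = (c * d) \<cdot>\<^sub>m X"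
  by (rule eq_matI) auto

lemma lin1:
  fixes X Y :: "real mat"
  assumes "X \<in> carrier_mat a b" "Y \<in> carrier_mat a b"
  shows "c \<cdot>\<^sub>m X - c \<cdot>\<^sub>m (X + Y) = (- c) \<cdot>\<^sub>m Y"
  by (rule eq_matI) (use assms in \<open>auto simp: algebra_simps\<close>)

lemma lin2:
  fixes X Y :: "real mat"
  assumes "X \<in> carrier_mat a b" "Y \<in> carrier_mat a b" "s' = - s"
  shows "s' \<cdot>\<^sub>m X + s \<cdot>\<^sub>m Y = s' \<cdot>\<^sub>m (X - Y)"
  by (rule eq_matI) (use assms in \<open>auto simp: algebra_simps\<close>)

lemma RtR_gen:
  fixes X Vm M :: "real mat"
  assumes X: "X = c \<cdot>\<^sub>m (Vm * M)" and cc: "c * c = 1" and VV: "Vm\<^sup>T * Vm = 1\<^sub>m m"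
    and Vm: "Vm \<in> carrier_mat n m" and M: "M \<in> carrier_mat m q"
  shows "X\<^sup>T * X = M\<^sup>T * M"
  unfolding X using Vm M cc by (simp add: mm smsm sm_one cancel1[OF VV])

lemma add_zero_rearr:
  fixes X Y Dd :: "real mat"
  assumes c: "X \<in> carrier_mat a b" "Y \<in> carrier_mat a b" "Dd \<in> carrier_mat a b"
    and e: "X + Y = 0\<^sub>m a b"
  shows "Dd - Y = Dd + X"
proof (rule eq_matI)
  fix i j assume ij: "i < dim_row (Dd + X)" "j < dim_col (Dd + X)"
  then have ij': "i < a" "j < b" using c by auto
  have "(X + Y) $$ (i, j) = 0\<^sub>m a b $$ (i, j)" using e by simp
  then show "(Dd - Y) $$ (i, j) = (Dd + X) $$ (i, j)" using ij' c by simp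
qed (use c in auto)

lemma minus_ab:
  fixes a b :: "real mat"
  assumes "a \<in> carrier_mat m m" "b \<in> carrier_mat m m"
  shows "a = b + (a - b)"
  by (rule eq_matI) (use assms in auto)

lemma inv_triple:
  fixes X Y W :: "real mat"
  assumes c: "X \<in> carrier_mat m m" "Y \<in> carrier_mat m m" "W \<in> carrier_mat m m"
    and i: "invertible_mat X" "invertible_mat Y" "invertible_mat W"
  shows "invertible_mat (X * (Y * W))" "minv (X * (Y * W)) = minv W * (minv Y * minv X)"
proof -
  note yw = inv_mult[OF c(2,3) i(2,3)]
  note xyw = inv_mult[OF c(1) _ i(1) yw(1)]
  show "invertible_mat (X * (Y * W))" using xyw c by auto
  have "minv (X * (Y * W)) = minv W * minv Y * minv X" using xyw(2) yw(2) c by auto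
  also have "\<dots> = minv W * (minv Y * minv X)"
    using minv_props[OF c(1) i(1)] minv_props[OF c(2) i(2)] minv_props[OF c(3) i(3)] by (simp add: mm)
  finally show "minv (X * (Y * W)) = minv W * (minv Y * minv X)" .
qed

lemma schur_gen:
  fixes M P1 Q D :: "real mat"
  assumes P1: "P1 \<in> carrier_mat N N" and Q: "Q \<in> carrier_mat N m" and D: "D \<in> carrier_mat m m"
    and iP1: "invertible_mat P1" and iM: "invertible_mat M"
    and M: "M = four_block_mat P1 Q Q\<^sup>T D"
  shows "invertible_mat (D - Q\<^sup>T * (minv P1 * Q))"
    "minv (D - Q\<^sup>T * (minv P1 * Q)) = mat m m (\<lambda>(i, j). minv M $$ (i + N, j + N))"
proof -
  have Mc: "M \<in> carrier_mat (N + m) (N + m)" unfolding M using P1 Q D by auto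
  note mi = minv_props[OF Mc iM]
  note pi = minv_props[OF P1 iP1]
  obtain N1 N2 N3 N4 where sb: "split_block (minv M) N N = (N1, N2, N3, N4)" by (cases "split_block (minv M) N N") auto
  note sp = split_block[OF sb, of m m]
  have cN: "N1 \<in> carrier_mat N N" "N2 \<in> carrier_mat N m" "N3 \<in> carrier_mat m N" "N4 \<in> carrier_mat m m"
    "minv M = four_block_mat N1 N2 N3 N4" using sp mi by auto
  have N4: "N4 = mat m m (\<lambda>(i, j). minv M $$ (i + N, j + N))"
    using sb mi unfolding split_block_def Let_def by auto
  have prod: "M * minv M = four_block_mat (P1 * N1 + Q * N3) (P1 * N2 + Q * N4)
      (Q\<^sup>T * N1 + D * N3) (Q\<^sup>T * N2 + D * N4)"
    unfolding cN(5) unfolding M by (rule mult_four_block_mat) (use P1 Q D cN in auto)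
  have one: "1\<^sub>m (N + m) = four_block_mat (1\<^sub>m N) (0\<^sub>m N m) (0\<^sub>m m N) (1\<^sub>m m)"
    by (rule eq_matI) auto
  have h: "P1 * N2 + Q * N4 = 0\<^sub>m N m" "Q\<^sup>T * N2 + D * N4 = 1\<^sub>m m"
  proof -
    have e: "four_block_mat (P1 * N1 + Q * N3) (P1 * N2 + Q * N4) (Q\<^sup>T * N1 + D * N3) (Q\<^sup>T * N2 + D * N4)
        = four_block_mat (1\<^sub>m N) (0\<^sub>m N m) (0\<^sub>m m N) (1\<^sub>m m)"
      using prod one mi by simp
    show "P1 * N2 + Q * N4 = 0\<^sub>m N m"
    proof (rule eq_matI)
      fix i j assume ij: "i < dim_row (0\<^sub>m N m :: real mat)" "j < dim_col (0\<^sub>m N m :: real mat)"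
      have "four_block_mat (P1 * N1 + Q * N3) (P1 * N2 + Q * N4) (Q\<^sup>T * N1 + D * N3) (Q\<^sup>T * N2 + D * N4) $$ (i, j + N)
        = four_block_mat (1\<^sub>m N) (0\<^sub>m N m) (0\<^sub>m m N) (1\<^sub>m m) $$ (i, j + N)" using e by simp
      then show "(P1 * N2 + Q * N4) $$ (i, j) = 0\<^sub>m N m $$ (i, j)" using ij P1 Q D cN by simp
    qed (use P1 Q D cN in auto)
    show "Q\<^sup>T * N2 + D * N4 = 1\<^sub>m m"
    proof (rule eq_matI)
      fix i j assume ij: "i < dim_row (1\<^sub>m m :: real mat)" "j < dim_col (1\<^sub>m m :: real mat)"
      have "four_block_mat (P1 * N1 + Q * N3) (P1 * N2 + Q * N4) (Q\<^sup>T * N1 + D * N3) (Q\<^sup>T * N2 + D * N4) $$ (i + N, j + N)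
        = four_block_mat (1\<^sub>m N) (0\<^sub>m N m) (0\<^sub>m m N) (1\<^sub>m m) $$ (i + N, j + N)" using e by simp
      then show "(Q\<^sup>T * N2 + D * N4) $$ (i, j) = 1\<^sub>m m $$ (i, j)" using ij P1 Q D cN by simp
    qed (use P1 Q D cN in auto)
  qed
  define X where "X = minv P1 * (Q * N4)"
  have cX: "X \<in> carrier_mat N m" unfolding X_def using pi Q cN by auto
  have NX: "N2 + X = 0\<^sub>m N m"
  proof -
    have "minv P1 * (P1 * N2 + Q * N4) = N2 + X"
      unfolding X_def using pi P1 Q cN by (simp add: mm cancel1[OF pi(3)])
    then show ?thesis using h(1) pi by simp
  qed
  have QX: "Q\<^sup>T * N2 + Q\<^sup>T * X = 0\<^sub>m m m"
  proof -
    have "Q\<^sup>T * N2 + Q\<^sup>T * X = Q\<^sup>T * (N2 + X)" using Q cN cX by (simp add: mm)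
    then show ?thesis using NX Q by simp
  qed
  have "(D - Q\<^sup>T * (minv P1 * Q)) * N4 = D * N4 - Q\<^sup>T * X"
    unfolding X_def using D Q pi cN by (simp add: mm)
  also have "\<dots> = D * N4 + Q\<^sup>T * N2"
    by (rule add_zero_rearr[OF _ _ _ QX]) (use D Q cN cX in auto)
  also have "\<dots> = Q\<^sup>T * N2 + D * N4" by (rule comm_add_mat) (use D Q cN in auto)
  also have "\<dots> = 1\<^sub>m m" using h(2) .
  finally have e: "(D - Q\<^sup>T * (minv P1 * Q)) * N4 = 1\<^sub>m m" .
  have cc: "D - Q\<^sup>T * (minv P1 * Q) \<in> carrier_mat m m" using D Q pi by (auto intro!: minus_carrier_mat)
  from inv_right_to_minv[OF cc cN(4) e] N4
  show "invertible_mat (D - Q\<^sup>T * (minv P1 * Q))"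
    "minv (D - Q\<^sup>T * (minv P1 * Q)) = mat m m (\<lambda>(i, j). minv M $$ (i + N, j + N))" by auto
qed

lemma add_final:
  fixes A1 A2 B1 B2 B3 :: "real mat"
  assumes c: "A1 \<in> carrier_mat m m" "A2 \<in> carrier_mat m m" "B1 \<in> carrier_mat m m" "B2 \<in> carrier_mat m m"
    "B3 \<in> carrier_mat m m"
  shows "(\<mu> \<cdot>\<^sub>m A1 + (B1 + B2) - B2) - (\<mu> \<cdot>\<^sub>m A2 + B1 - B3) = \<mu> \<cdot>\<^sub>m (A1 - A2) + B3"
  by (rule eq_matI) (use c in \<open>auto simp: algebra_simps\<close>)

lemma final_alg:
  fixes a b Gm F0 F1 d :: "real mat" and \<mu> :: real
  assumes c: "a \<in> carrier_mat m m" "b \<in> carrier_mat m m" "Gm \<in> carrier_mat m m" "F0 \<in> carrier_mat m m"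
    and asym: "a\<^sup>T = a"
    and ia: "invertible_mat a" and ib: "invertible_mat b" and ic: "invertible_mat (a - b)"
    and iF0: "invertible_mat F0" and iF1: "invertible_mat F1" and id: "invertible_mat d"
    and F1: "F1 = Gm * (minv a * F0)"
    and d: "d = \<mu> \<cdot>\<^sub>m 1\<^sub>m m + Gm * minv (a - b) * Gm\<^sup>T - Gm * minv a * Gm\<^sup>T"
  shows "invertible_mat (\<mu> \<cdot>\<^sub>m (minv F0 * minv b * F0 - minv F0 * minv a * F0) + minv (F0\<^sup>T * F0) * (F1\<^sup>T * F1))
    \<and> minv F1 * minv d * F1 = minv (\<mu> \<cdot>\<^sub>m (minv F0 * minv b * F0 - minv F0 * minv a * F0) + minv (F0\<^sup>T * F0) * (F1\<^sup>T * F1))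
        * (minv F0 * minv b * F0 - minv F0 * minv a * F0)
    \<and> invertible_mat (\<mu> \<cdot>\<^sub>m ((F0\<^sup>T * F0) * (minv F0 * minv b * F0) - (F0\<^sup>T * F0) * (minv F0 * minv a * F0)) + F1\<^sup>T * F1)
    \<and> minv F1 * minv d * F1 = minv (\<mu> \<cdot>\<^sub>m ((F0\<^sup>T * F0) * (minv F0 * minv b * F0) - (F0\<^sup>T * F0) * (minv F0 * minv a * F0)) + F1\<^sup>T * F1)
        * ((F0\<^sup>T * F0) * (minv F0 * minv b * F0) - (F0\<^sup>T * F0) * (minv F0 * minv a * F0))"
proof -
  have cc: "a - b \<in> carrier_mat m m" using c by (auto intro!: minus_carrier_mat)
  note pa = minv_props[OF c(1) ia] and pb = minv_props[OF c(2) ib] and pc = minv_props[OF cc ic]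
    and pF0 = minv_props[OF c(4) iF0]
  have cF1: "F1 \<in> carrier_mat m m" unfolding F1 using c pa by auto
  note pF1 = minv_props[OF cF1 iF1]
  have iG: "invertible_mat Gm" using inv_factors(1)[of Gm m "minv a * F0"] iF1 F1 c pa by auto
  note pG = minv_props[OF c(3) iG]
  have iaT: "(minv a)\<^sup>T = minv a" using inv_transpose(2)[OF c(1) ia] asym by simp
  have cd: "d \<in> carrier_mat m m" unfolding d using c pa pc by (auto intro!: minus_carrier_mat)
  note pd = minv_props[OF cd id]
  have iF1eq: "minv F1 = minv F0 * (a * minv Gm)"
    using inv_triple(2)[OF c(3) pa(1) c(4) iG inv_minv(1)[OF c(1) ia] iF0] inv_minv(2)[OF c(1) ia] F1 by simp
  define Y where "Y = minv a * F0"
  define H where "H = Gm\<^sup>T * (Gm * Y)"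
  have cY: "Y \<in> carrier_mat m m" "H \<in> carrier_mat m m" unfolding H_def Y_def using c pa by auto
  have key: "minv b * (a * (minv (a - b) * H)) = minv (a - b) * H + minv b * H"
  proof -
    define cm where "cm = a - b"
    have ccm: "cm \<in> carrier_mat m m" "cm * minv cm = 1\<^sub>m m" "minv cm \<in> carrier_mat m m"
      using cc pc unfolding cm_def by auto
    have "minv b * (a * (minv cm * H)) = minv b * ((b + cm) * (minv cm * H))"
      using minus_ab[OF c(1,2)] unfolding cm_def by simp
    also have "\<dots> = minv cm * H + minv b * H"
      using c ccm pb cY by (simp add: mm cancel1[OF pb(3)] cancel1[OF ccm(2)])
    finally show ?thesis unfolding cm_def .
  qed
  have E4: "minv Gm * (d * (Gm * Y)) = \<mu> \<cdot>\<^sub>m Y + minv (a - b) * H - minv a * H"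
    unfolding d H_def using c cc pa pc pG cY by (simp add: mm cancel1[OF pG(3)])
  define W where "W = \<mu> \<cdot>\<^sub>m Y + minv (a - b) * H - minv a * H"
  have cW: "W \<in> carrier_mat m m" unfolding W_def using cY pa pc by (auto intro!: minus_carrier_mat)
  have ibaW: "minv b * (a * W) = \<mu> \<cdot>\<^sub>m (minv b * F0) + (minv (a - b) * H + minv b * H) - minv b * H"
  proof -
    have "minv b * (a * W) = \<mu> \<cdot>\<^sub>m (minv b * (a * Y)) + minv b * (a * (minv (a - b) * H)) - minv b * (a * (minv a * H))"
      unfolding W_def using c cc pa pb pc cY by (simp add: mm)
    also have "\<dots> = \<mu> \<cdot>\<^sub>m (minv b * F0) + (minv (a - b) * H + minv b * H) - minv b * H"
      unfolding key unfolding Y_def using c pa pb cY by (simp add: cancel1[OF pa(2)])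
    finally show ?thesis .
  qed
  have iaaW: "minv a * (a * W) = W" using c pa cW by (simp add: cancel1[OF pa(3)])
  have RHS: "(minv F0 * minv b * F0 - minv F0 * minv a * F0) * (minv F1 * (d * F1))
      = minv F0 * (\<mu> \<cdot>\<^sub>m ((minv b - minv a) * F0) + minv a * H)"
  proof -
    have "(minv F0 * minv b * F0 - minv F0 * minv a * F0) * (minv F1 * (d * F1))
        = minv F0 * (minv b * (a * (minv Gm * (d * (Gm * Y)))) - minv a * (a * (minv Gm * (d * (Gm * Y)))))"
      unfolding iF1eq unfolding F1 Y_def using c pa pb pF0 pG cd by (simp add: mm cancel1[OF pF0(2)])
    also have "\<dots> = minv F0 * ((\<mu> \<cdot>\<^sub>m (minv b * F0) + (minv (a - b) * H + minv b * H) - minv b * H)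
        - (\<mu> \<cdot>\<^sub>m Y + minv (a - b) * H - minv a * H))"
      unfolding E4 W_def[symmetric] ibaW iaaW unfolding W_def ..
    also have "\<dots> = minv F0 * (\<mu> \<cdot>\<^sub>m (minv b * F0 - minv a * F0) + minv a * H)"
      unfolding Y_def by (subst add_final) (use c pa pb pc cY in \<open>auto simp: Y_def\<close>)
    also have "\<dots> = minv F0 * (\<mu> \<cdot>\<^sub>m ((minv b - minv a) * F0) + minv a * H)"
      using c pa pb by (simp add: mm)
    finally show ?thesis .
  qed
  have iG0: "minv (F0\<^sup>T * F0) = minv F0 * (minv F0)\<^sup>T"
    using inv_mult(2)[OF _ c(4) inv_transpose(1)[OF c(4) iF0] iF0] inv_transpose(2)[OF c(4) iF0] c by simp
  have TT: "(minv F0)\<^sup>T * F0\<^sup>T = 1\<^sub>m m"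
  proof -
    have "(F0 * minv F0)\<^sup>T = (minv F0)\<^sup>T * F0\<^sup>T" by (rule tr_mult) (use pF0 c in simp)
    then show ?thesis using pF0 by simp
  qed
  have G1: "F1\<^sup>T * F1 = F0\<^sup>T * (minv a * H)"
    unfolding F1 H_def Y_def using c pa iaT by (simp add: mm)
  have LHS: "\<mu> \<cdot>\<^sub>m (minv F0 * minv b * F0 - minv F0 * minv a * F0) + minv (F0\<^sup>T * F0) * (F1\<^sup>T * F1)
      = minv F0 * (\<mu> \<cdot>\<^sub>m ((minv b - minv a) * F0) + minv a * H)"
    unfolding iG0 G1 using c pa pb pF0 cY by (simp add: mm cancel1[OF TT])
  define E where "E = \<mu> \<cdot>\<^sub>m (minv F0 * minv b * F0 - minv F0 * minv a * F0) + minv (F0\<^sup>T * F0) * (F1\<^sup>T * F1)"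
  define Df where "Df = minv F0 * minv b * F0 - minv F0 * minv a * F0"
  have EDf: "E = Df * (minv F1 * (d * F1))" unfolding E_def Df_def LHS RHS ..
  have cDf: "Df \<in> carrier_mat m m" unfolding Df_def using pF0 pb pa c by (auto intro!: minus_carrier_mat)
  have Dfeq: "Df = minv F0 * ((minv b * ((a - b) * minv a)) * F0)"
  proof -
    have "minv b * ((a - b) * minv a) = minv b - minv a"
      using c pa pb by (simp add: mm cancel1[OF pb(3)] cancel1[OF pa(2)])
    then show ?thesis unfolding Df_def using c pa pb pF0 by (simp add: mm)
  qed
  have iDf: "invertible_mat Df"
  proof -
    have c1: "(a - b) * minv a \<in> carrier_mat m m" using cc pa(1) by (rule mult_carrier_mat)
    have c2: "minv b * ((a - b) * minv a) \<in> carrier_mat m m" using pb(1) c1 by (rule mult_carrier_mat)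
    have c3: "(minv b * ((a - b) * minv a)) * F0 \<in> carrier_mat m m" using c2 c(4) by (rule mult_carrier_mat)
    have i1: "invertible_mat ((a - b) * minv a)" using inv_mult(1)[OF cc pa(1) ic inv_minv(1)[OF c(1) ia]] .
    have i2: "invertible_mat (minv b * ((a - b) * minv a))"
      using inv_mult(1)[OF pb(1) c1 inv_minv(1)[OF c(2) ib] i1] .
    have i3: "invertible_mat ((minv b * ((a - b) * minv a)) * F0)"
      using inv_mult(1)[OF c2 c(4) i2 iF0] .
    show ?thesis unfolding Dfeq using inv_mult(1)[OF pF0(1) c3 inv_minv(1)[OF c(4) iF0] i3] .
  qed
  have iU: "invertible_mat (minv F1 * (d * F1))" "minv (minv F1 * (d * F1)) = minv F1 * (minv d * F1)"
    using inv_triple[OF pF1(1) cd cF1 inv_minv(1)[OF cF1 iF1] id iF1] inv_minv(2)[OF cF1 iF1] by auto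
  have cU: "minv F1 * (d * F1) \<in> carrier_mat m m" using pF1 cd cF1 by auto
  have iE: "invertible_mat E" "minv E = minv (minv F1 * (d * F1)) * minv Df"
    unfolding EDf using inv_mult[OF cDf cU iDf iU(1)] by auto
  note pDf = minv_props[OF cDf iDf]
  have U1: "minv F1 * minv d * F1 = minv E * Df"
    unfolding iE(2) iU(2) using pDf pF1 pd cF1 cDf by (simp add: mm cancel1[OF pDf(3)])
  define G0 where "G0 = F0\<^sup>T * F0"
  have cG0: "G0 \<in> carrier_mat m m" unfolding G0_def using c by auto
  have iG0': "invertible_mat G0" unfolding G0_def
    using inv_mult(1)[OF _ c(4) inv_transpose(1)[OF c(4) iF0] iF0] c by simp
  note pG0 = minv_props[OF cG0 iG0']
  have cG1: "F1\<^sup>T * F1 \<in> carrier_mat m m" using cF1 by auto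
  have Th: "\<mu> \<cdot>\<^sub>m (G0 * (minv F0 * minv b * F0) - G0 * (minv F0 * minv a * F0)) + F1\<^sup>T * F1 = G0 * E"
    unfolding E_def G0_def[symmetric] using c pa pb pF0 cG0 pG0 cG1 cF1 by (simp add: mm cancel1[OF pG0(2)])
  have cE: "E \<in> carrier_mat m m" unfolding EDf using cDf cU by auto
  have iGE: "invertible_mat (G0 * E)" "minv (G0 * E) = minv E * minv G0"
    using inv_mult[OF cG0 cE iG0' iE(1)] by auto
  note pE = minv_props[OF cE iE(1)]
  have ThD: "G0 * (minv F0 * minv b * F0) - G0 * (minv F0 * minv a * F0) = G0 * Df"
    unfolding Df_def using c pa pb pF0 cG0 by (simp add: mm)
  have U2: "minv F1 * minv d * F1 = minv (G0 * E) * (G0 * (minv F0 * minv b * F0) - G0 * (minv F0 * minv a * F0))"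
    unfolding ThD iGE(2) U1 using pE pG0 cDf cG0 by (simp add: mm cancel1[OF pG0(3)])
  have c1: "invertible_mat (\<mu> \<cdot>\<^sub>m (minv F0 * minv b * F0 - minv F0 * minv a * F0) + minv (F0\<^sup>T * F0) * (F1\<^sup>T * F1))"
    using iE(1) unfolding E_def .
  have c2: "minv F1 * minv d * F1 = minv (\<mu> \<cdot>\<^sub>m (minv F0 * minv b * F0 - minv F0 * minv a * F0) + minv (F0\<^sup>T * F0) * (F1\<^sup>T * F1))
        * (minv F0 * minv b * F0 - minv F0 * minv a * F0)"
    using U1 unfolding E_def Df_def .
  have c3: "invertible_mat (\<mu> \<cdot>\<^sub>m ((F0\<^sup>T * F0) * (minv F0 * minv b * F0) - (F0\<^sup>T * F0) * (minv F0 * minv a * F0)) + F1\<^sup>T * F1)"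
    using iGE(1) unfolding Th[unfolded G0_def, symmetric] G0_def .
  have c4: "minv F1 * minv d * F1 = minv (\<mu> \<cdot>\<^sub>m ((F0\<^sup>T * F0) * (minv F0 * minv b * F0) - (F0\<^sup>T * F0) * (minv F0 * minv a * F0)) + F1\<^sup>T * F1)
        * ((F0\<^sup>T * F0) * (minv F0 * minv b * F0) - (F0\<^sup>T * F0) * (minv F0 * minv a * F0))"
    using U2 unfolding Th[unfolded G0_def, symmetric] G0_def .
  show ?thesis using c1 c2 c3 c4 by (intro conjI)
qed

definition Esel :: "nat \<Rightarrow> nat \<Rightarrow> real mat" where
  "Esel m q = mat (q * m) m (\<lambda>(i, a). if i div m = q - 1 \<and> i mod m = a then 1 else 0)"

lemma Esel_c: "Esel m q \<in> carrier_mat (q * m) m" unfolding Esel_def by auto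

lemma Esel_idx: "i < q * m \<Longrightarrow> a < m \<Longrightarrow> Esel m q $$ (i, a) = (if i div m = q - 1 \<and> i mod m = a then 1 else 0)"
  unfolding Esel_def by simp

lemma sel_iff: fixes t d a m :: nat assumes "a < m" shows "(t div m = d \<and> t mod m = a) \<longleftrightarrow> t = d * m + a"
proof
  assume "t div m = d \<and> t mod m = a"
  then show "t = d * m + a" using div_mult_mod_eq[of t m] by (metis add.commute mult.commute)
next
  assume "t = d * m + a" then show "t div m = d \<and> t mod m = a" using assms by auto
qed

lemma sel_sum: fixes a m q :: nat assumes a: "a < m" and q: "1 \<le> q"
  shows "(\<Sum>t\<in>{0..<q * m}. (if t div m = q - 1 \<and> t mod m = a then f t else 0)) = (f ((q - 1) * m + a) :: real)"
proof -
  have lt: "(q - 1) * m + a < q * m"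
  proof -
    have "(q - 1) * m + a < (q - 1) * m + m" using a by simp
    also have "\<dots> = q * m" using q by (cases q) auto
    finally show ?thesis .
  qed
  have "(\<Sum>t\<in>{0..<q * m}. (if t div m = q - 1 \<and> t mod m = a then f t else 0))
      = (\<Sum>t\<in>{0..<q * m}. (if t = (q - 1) * m + a then f t else 0))"
    using sel_iff[OF a] by (intro sum.cong) auto
  also have "\<dots> = f ((q - 1) * m + a)" using lt by (simp add: sum.delta')
  finally show ?thesis .
qed

lemma Esel_mult:
  assumes X: "X \<in> carrier_mat m c" and i: "i < q * m" and b: "b < c"
  shows "(Esel m q * X) $$ (i, b) = (if i div m = q - 1 then X $$ (i mod m, b) else 0)"
proof -
  have m: "0 < m" using i by (cases m) auto
  have "(Esel m q * X) $$ (i, b) = (\<Sum>t\<in>{0..<m}. Esel m q $$ (i, t) * X $$ (t, b))"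
    using X i b Esel_c[of m q] by (simp add: scalar_prod_def)
  also have "\<dots> = (\<Sum>t\<in>{0..<m}. (if t = i mod m then (if i div m = q - 1 then X $$ (t, b) else 0) else 0))"
    using i by (intro sum.cong) (auto simp: Esel_idx)
  also have "\<dots> = (if i div m = q - 1 then X $$ (i mod m, b) else 0)"
    using m by (simp add: sum.delta')
  finally show ?thesis .
qed

lemma blk_sel:
  assumes Y: "Y \<in> carrier_mat (q * m) (q * m)" and q: "1 \<le> q"
  shows "(Esel m q)\<^sup>T * (Y * Esel m q) = blk m Y q q"
proof (rule eq_matI)
  fix a b assume ab: "a < dim_row (blk m Y q q)" "b < dim_col (blk m Y q q)"
  then have ab': "a < m" "b < m" unfolding blk_def by auto
  have YE: "(Y * Esel m q) $$ (i, b) = Y $$ (i, (q - 1) * m + b)" if i: "i < q * m" for i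
  proof -
    have "(Y * Esel m q) $$ (i, b) = (\<Sum>t\<in>{0..<q * m}. Y $$ (i, t) * Esel m q $$ (t, b))"
      using Y i ab' Esel_c[of m q] by (simp add: scalar_prod_def)
    also have "\<dots> = (\<Sum>t\<in>{0..<q * m}. (if t div m = q - 1 \<and> t mod m = b then Y $$ (i, t) else 0))"
      using ab' by (intro sum.cong) (auto simp: Esel_idx)
    also have "\<dots> = Y $$ (i, (q - 1) * m + b)" by (rule sel_sum[OF ab'(2) q])
    finally show ?thesis .
  qed
  have "((Esel m q)\<^sup>T * (Y * Esel m q)) $$ (a, b) = (\<Sum>t\<in>{0..<q * m}. Esel m q $$ (t, a) * (Y * Esel m q) $$ (t, b))"
    using Y ab' Esel_c[of m q] by (simp add: scalar_prod_def)
  also have "\<dots> = (\<Sum>t\<in>{0..<q * m}. (if t div m = q - 1 \<and> t mod m = a then Y $$ (t, (q - 1) * m + b) else 0))"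
    using ab' YE by (intro sum.cong) (auto simp: Esel_idx)
  also have "\<dots> = Y $$ ((q - 1) * m + a, (q - 1) * m + b)" by (rule sel_sum[OF ab'(1) q])
  also have "\<dots> = blk m Y q q $$ (a, b)" unfolding blk_def using ab' by simp
  finally show "((Esel m q)\<^sup>T * (Y * Esel m q)) $$ (a, b) = blk m Y q q $$ (a, b)" .
qed (use Y Esel_c[of m q] in \<open>auto simp: blk_def\<close>)

lemma dm_hi: fixes i q m :: nat assumes "q * m \<le> i" "i < q * m + m"
  shows "i div m = q" "i mod m = i - q * m"
proof -
  obtain r where r: "i = q * m + r" "r < m" using assms by (metis add_less_cancel_left le_Suc_ex)
  then show "i div m = q" "i mod m = i - q * m" by auto
qed

lemma dm_lo: fixes i q m :: nat assumes "i < q * m" shows "i div m < q"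
  using assms by (simp add: less_mult_imp_div_less)

definition te :: "nat \<Rightarrow> (nat \<Rightarrow> real mat) \<Rightarrow> (nat \<Rightarrow> real mat) \<Rightarrow> nat \<Rightarrow> nat \<Rightarrow> real" where
  "te m Gam Om i j = (let bi = i div m; bj = j div m; a = i mod m; b = j mod m in
     if bi = bj then Om (bi + 1) $$ (a, b)
     else if bi = bj + 1 then Gam (bj + 1) $$ (a, b)
     else if bj = bi + 1 then (Gam (bi + 1))\<^sup>T $$ (a, b)
     else 0)"

lemma T_idx: "i < k * m \<Longrightarrow> j < k * m \<Longrightarrow> T_mat m Gam Om k $$ (i, j) = te m Gam Om i j"
  unfolding T_mat_def te_def by simp

lemma T_c: "T_mat m Gam Om k \<in> carrier_mat (k * m) (k * m)"
  unfolding T_mat_def by auto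

lemma T_split:
  assumes q: "1 \<le> q" and Omc: "Om (q + 1) \<in> carrier_mat m m" and Gc: "Gam q \<in> carrier_mat m m"
  shows "T_mat m Gam Om (q + 1) - \<mu> \<cdot>\<^sub>m 1\<^sub>m ((q + 1) * m) =
    four_block_mat (T_mat m Gam Om q - \<mu> \<cdot>\<^sub>m 1\<^sub>m (q * m)) (Esel m q * (Gam q)\<^sup>T)
      ((Esel m q * (Gam q)\<^sup>T)\<^sup>T) (Om (q + 1) - \<mu> \<cdot>\<^sub>m 1\<^sub>m m)"
proof (rule eq_matI)
  have cT: "T_mat m Gam Om q - \<mu> \<cdot>\<^sub>m 1\<^sub>m (q * m) \<in> carrier_mat (q * m) (q * m)"
    using T_c[of m Gam Om q] by (auto intro!: minus_carrier_mat)
  have cQ: "Esel m q * (Gam q)\<^sup>T \<in> carrier_mat (q * m) m" using Esel_c[of m q] Gc by auto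
  have cD: "Om (q + 1) - \<mu> \<cdot>\<^sub>m 1\<^sub>m m \<in> carrier_mat m m" using Omc by (auto intro!: minus_carrier_mat)
  have dimsR: "dim_row (four_block_mat (T_mat m Gam Om q - \<mu> \<cdot>\<^sub>m 1\<^sub>m (q * m)) (Esel m q * (Gam q)\<^sup>T)
      ((Esel m q * (Gam q)\<^sup>T)\<^sup>T) (Om (q + 1) - \<mu> \<cdot>\<^sub>m 1\<^sub>m m)) = q * m + m"
    "dim_col (four_block_mat (T_mat m Gam Om q - \<mu> \<cdot>\<^sub>m 1\<^sub>m (q * m)) (Esel m q * (Gam q)\<^sup>T)
      ((Esel m q * (Gam q)\<^sup>T)\<^sup>T) (Om (q + 1) - \<mu> \<cdot>\<^sub>m 1\<^sub>m m)) = q * m + m"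
    using cT cQ cD by auto
  fix i j assume ij: "i < dim_row (four_block_mat (T_mat m Gam Om q - \<mu> \<cdot>\<^sub>m 1\<^sub>m (q * m)) (Esel m q * (Gam q)\<^sup>T)
      ((Esel m q * (Gam q)\<^sup>T)\<^sup>T) (Om (q + 1) - \<mu> \<cdot>\<^sub>m 1\<^sub>m m))"
    "j < dim_col (four_block_mat (T_mat m Gam Om q - \<mu> \<cdot>\<^sub>m 1\<^sub>m (q * m)) (Esel m q * (Gam q)\<^sup>T)
      ((Esel m q * (Gam q)\<^sup>T)\<^sup>T) (Om (q + 1) - \<mu> \<cdot>\<^sub>m 1\<^sub>m m))"
  then have ij': "i < q * m + m" "j < q * m + m" unfolding dimsR by auto
  have ij'': "i < (q + 1) * m" "j < (q + 1) * m" using ij' by (auto simp: algebra_simps)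
  have L: "(T_mat m Gam Om (q + 1) - \<mu> \<cdot>\<^sub>m 1\<^sub>m ((q + 1) * m)) $$ (i, j) = te m Gam Om i j - \<mu> * (if i = j then 1 else 0)"
    using ij'' T_c[of m Gam Om "q + 1"] by (simp add: T_idx)
  have R: "four_block_mat (T_mat m Gam Om q - \<mu> \<cdot>\<^sub>m 1\<^sub>m (q * m)) (Esel m q * (Gam q)\<^sup>T)
      ((Esel m q * (Gam q)\<^sup>T)\<^sup>T) (Om (q + 1) - \<mu> \<cdot>\<^sub>m 1\<^sub>m m) $$ (i, j) =
      (if i < q * m then if j < q * m then (T_mat m Gam Om q - \<mu> \<cdot>\<^sub>m 1\<^sub>m (q * m)) $$ (i, j)
         else (Esel m q * (Gam q)\<^sup>T) $$ (i, j - q * m)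
       else if j < q * m then ((Esel m q * (Gam q)\<^sup>T)\<^sup>T) $$ (i - q * m, j)
         else (Om (q + 1) - \<mu> \<cdot>\<^sub>m 1\<^sub>m m) $$ (i - q * m, j - q * m))"
    using ij' cT cQ cD by (subst index_mat_four_block) auto
  show "(T_mat m Gam Om (q + 1) - \<mu> \<cdot>\<^sub>m 1\<^sub>m ((q + 1) * m)) $$ (i, j) = four_block_mat (T_mat m Gam Om q - \<mu> \<cdot>\<^sub>m 1\<^sub>m (q * m)) (Esel m q * (Gam q)\<^sup>T)
      ((Esel m q * (Gam q)\<^sup>T)\<^sup>T) (Om (q + 1) - \<mu> \<cdot>\<^sub>m 1\<^sub>m m) $$ (i, j)"
  proof (cases "i < q * m"; cases "j < q * m")
    assume a: "i < q * m" "j < q * m"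
    then show ?thesis unfolding L R using T_c[of m Gam Om q] by (simp add: T_idx)
  next
    assume a: "i < q * m" "\<not> j < q * m"
    have bi: "i div m < q" using dm_lo a(1) by auto
    note bj = dm_hi[of q m j] a(2) ij'(2)
    have jb: "j - q * m < m" using a ij' by auto
    have E: "(Esel m q * (Gam q)\<^sup>T) $$ (i, j - q * m) = (if i div m = q - 1 then (Gam q)\<^sup>T $$ (i mod m, j - q * m) else 0)"
      using Esel_mult[of "(Gam q)\<^sup>T" m m i q "j - q * m"] Gc a jb by auto
    have "i \<noteq> j" using a by auto
    moreover have "te m Gam Om i j = (if i div m = q - 1 then (Gam q)\<^sup>T $$ (i mod m, j - q * m) else 0)"
      unfolding te_def Let_def using bi bj q by auto
    ultimately show ?thesis unfolding L R using a E by simp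
  next
    assume a: "\<not> i < q * m" "j < q * m"
    have bj: "j div m < q" using dm_lo a(2) by auto
    note bi = dm_hi[of q m i] a(1) ij'(1)
    have ib: "i - q * m < m" using a ij' by auto
    have jm: "j mod m < m" using ib by auto
    have E: "((Esel m q * (Gam q)\<^sup>T)\<^sup>T) $$ (i - q * m, j) = (if j div m = q - 1 then Gam q $$ (i - q * m, j mod m) else 0)"
      using Esel_mult[of "(Gam q)\<^sup>T" m m j q "i - q * m"] Gc a ib jm Esel_c[of m q] by auto
    have "i \<noteq> j" using a by auto
    moreover have "te m Gam Om i j = (if j div m = q - 1 then Gam q $$ (i - q * m, j mod m) else 0)"
      unfolding te_def Let_def using bi bj q by auto
    ultimately show ?thesis unfolding L R using a E by simp
  next
    assume a: "\<not> i < q * m" "\<not> j < q * m"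
    note bi = dm_hi[of q m i] a(1) ij'(1)
    note bj = dm_hi[of q m j] a(2) ij'(2)
    have ib: "i - q * m < m" "j - q * m < m" using a ij' by auto
    have "te m Gam Om i j = Om (q + 1) $$ (i - q * m, j - q * m)"
      unfolding te_def Let_def using bi bj by auto
    moreover have "(i - q * m = j - q * m) = (i = j)" using a by auto
    ultimately show ?thesis unfolding L R using a ib Omc by simp
  qed
next
  have cT: "T_mat m Gam Om q - \<mu> \<cdot>\<^sub>m 1\<^sub>m (q * m) \<in> carrier_mat (q * m) (q * m)"
    using T_c[of m Gam Om q] by (auto intro!: minus_carrier_mat)
  have cD: "Om (q + 1) - \<mu> \<cdot>\<^sub>m 1\<^sub>m m \<in> carrier_mat m m" using Omc by (auto intro!: minus_carrier_mat)
  show "dim_row (T_mat m Gam Om (q + 1) - \<mu> \<cdot>\<^sub>m 1\<^sub>m ((q + 1) * m)) = dim_row (four_block_mat (T_mat m Gam Om q - \<mu> \<cdot>\<^sub>m 1\<^sub>m (q * m)) (Esel m q * (Gam q)\<^sup>T)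
      ((Esel m q * (Gam q)\<^sup>T)\<^sup>T) (Om (q + 1) - \<mu> \<cdot>\<^sub>m 1\<^sub>m m))"
    using cT cD by simp
next
  have cT: "T_mat m Gam Om q - \<mu> \<cdot>\<^sub>m 1\<^sub>m (q * m) \<in> carrier_mat (q * m) (q * m)"
    using T_c[of m Gam Om q] by (auto intro!: minus_carrier_mat)
  have cD: "Om (q + 1) - \<mu> \<cdot>\<^sub>m 1\<^sub>m m \<in> carrier_mat m m" using Omc by (auto intro!: minus_carrier_mat)
  show "dim_col (T_mat m Gam Om (q + 1) - \<mu> \<cdot>\<^sub>m 1\<^sub>m ((q + 1) * m)) = dim_col (four_block_mat (T_mat m Gam Om q - \<mu> \<cdot>\<^sub>m 1\<^sub>m (q * m)) (Esel m q * (Gam q)\<^sup>T)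
      ((Esel m q * (Gam q)\<^sup>T)\<^sup>T) (Om (q + 1) - \<mu> \<cdot>\<^sub>m 1\<^sub>m m))"
    using cT cD by simp
qed

lemma T1: assumes "Om 1 \<in> carrier_mat m m" shows "T_mat m Gam Om 1 = Om 1"
proof (rule eq_matI)
  fix i j assume ij: "i < dim_row (Om 1)" "j < dim_col (Om 1)"
  then have "i < m" "j < m" using assms by auto
  then show "T_mat m Gam Om 1 $$ (i, j) = Om 1 $$ (i, j)" by (simp add: T_idx te_def)
qed (use assms T_c[of m Gam Om 1] in auto)

lemma blk11: "X \<in> carrier_mat m m \<Longrightarrow> blk m X 1 1 = X"
  unfolding blk_def by (rule eq_matI) auto

lemma add_shift:
  fixes X Y Zz :: "real mat"
  assumes "X \<in> carrier_mat m m" "Y \<in> carrier_mat m m" "Zz \<in> carrier_mat m m"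
  shows "(X - Zz) - ((\<mu> \<cdot>\<^sub>m 1\<^sub>m m + Y) - Zz) = (X - \<mu> \<cdot>\<^sub>m 1\<^sub>m m) - Y"
  by (rule eq_matI) (use assms in auto)

lemma shifted:
  fixes Gam Om :: "nat \<Rightarrow> real mat"
  assumes k: "1 \<le> k"
    and Tinv: "\<forall>j. 1 \<le> j \<and> j \<le> k \<longrightarrow> invertible_mat (T_mat m Gam Om j - \<mu> \<cdot>\<^sub>m 1\<^sub>m (j * m))"
    and Omc: "\<forall>j. 1 \<le> j \<and> j \<le> k \<longrightarrow> Om j \<in> carrier_mat m m"
    and Gc: "\<forall>j \<le> k. Gam j \<in> carrier_mat m m"
    and Dk1: "2 \<le> k \<longrightarrow> minv (Delta Gam Om (k - 1)) \<in> carrier_mat m m"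
  shows "invertible_mat (Delta Gam Om k - Delta_mu m Gam Om \<mu> k)
    \<and> blk m (minv (T_mat m Gam Om k - \<mu> \<cdot>\<^sub>m 1\<^sub>m (k * m))) k k = minv (Delta Gam Om k - Delta_mu m Gam Om \<mu> k)"
proof (cases "k = 1")
  case True
  have O1: "Om 1 \<in> carrier_mat m m" using Omc k by auto
  have e: "Delta Gam Om k - Delta_mu m Gam Om \<mu> k = T_mat m Gam Om 1 - \<mu> \<cdot>\<^sub>m 1\<^sub>m (1 * m)"
    using True T1[of Om m Gam, OF O1] by (simp add: Delta_mu_def)
  have inv: "invertible_mat (T_mat m Gam Om 1 - \<mu> \<cdot>\<^sub>m 1\<^sub>m (1 * m))" using Tinv True by auto
  have c1: "T_mat m Gam Om 1 - \<mu> \<cdot>\<^sub>m 1\<^sub>m (1 * m) \<in> carrier_mat m m"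
    using T_c[of m Gam Om 1] by (auto intro!: minus_carrier_mat)
  show ?thesis unfolding e using True inv blk11[OF minv_props(1)[OF c1 inv]] by simp
next
  case False
  define q where "q = k - 1"
  have q: "1 \<le> q" "q + 1 = k" "k - 1 = q" using k False unfolding q_def by auto
  have Ok: "Om (q + 1) \<in> carrier_mat m m" using Omc q by auto
  have Gq: "Gam q \<in> carrier_mat m m" using Gc q by auto
  have iD: "minv (Delta Gam Om q) \<in> carrier_mat m m" using Dk1 q by auto
  define P1 where "P1 = T_mat m Gam Om q - \<mu> \<cdot>\<^sub>m 1\<^sub>m (q * m)"
  define Q where "Q = Esel m q * (Gam q)\<^sup>T"
  define Dd where "Dd = Om (q + 1) - \<mu> \<cdot>\<^sub>m 1\<^sub>m m"
  define M where "M = T_mat m Gam Om (q + 1) - \<mu> \<cdot>\<^sub>m 1\<^sub>m ((q + 1) * m)"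
  have cP1: "P1 \<in> carrier_mat (q * m) (q * m)" unfolding P1_def using T_c[of m Gam Om q] by (auto intro!: minus_carrier_mat)
  have cQ: "Q \<in> carrier_mat (q * m) m" unfolding Q_def using Esel_c[of m q] Gq by auto
  have cDd: "Dd \<in> carrier_mat m m" unfolding Dd_def using Ok by (auto intro!: minus_carrier_mat)
  have iP1: "invertible_mat P1" unfolding P1_def using Tinv q by auto
  have iM: "invertible_mat M" unfolding M_def using Tinv q by auto
  have MS: "M = four_block_mat P1 Q Q\<^sup>T Dd" unfolding M_def P1_def Q_def Dd_def by (rule T_split[of q Om m Gam, OF q(1) Ok Gq])
  note sc = schur_gen[OF cP1 cQ cDd iP1 iM MS]
  note pP1 = minv_props[OF cP1 iP1]
  have blkM: "blk m (minv M) k k = mat m m (\<lambda>(i, j). minv M $$ (i + q * m, j + q * m))"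
    unfolding blk_def q(3) by (rule eq_matI) (auto simp: add.commute)
  define S where "S = blk m (minv P1) q q"
  have cS: "S \<in> carrier_mat m m" unfolding S_def blk_def by auto
  have QPQ: "Q\<^sup>T * (minv P1 * Q) = Gam q * (S * (Gam q)\<^sup>T)"
  proof -
    have "Q\<^sup>T * (minv P1 * Q) = Gam q * (((Esel m q)\<^sup>T * (minv P1 * Esel m q)) * (Gam q)\<^sup>T)"
      unfolding Q_def using Esel_c[of m q] Gq pP1 by (simp add: mm)
    then show ?thesis unfolding S_def blk_sel[OF pP1(1) q(1)] .
  qed
  have ce: "Delta Gam Om k - Delta_mu m Gam Om \<mu> k = Dd - Q\<^sup>T * (minv P1 * Q)"
  proof -
    have dk: "Delta Gam Om k = Om (q + 1) - Gam q * minv (Delta Gam Om q) * (Gam q)\<^sup>T"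
      using Delta_Suc[OF q(1), of Gam Om] q(2) by simp
    have dmk: "Delta_mu m Gam Om \<mu> k = (\<mu> \<cdot>\<^sub>m 1\<^sub>m m + Gam q * S * (Gam q)\<^sup>T) - Gam q * minv (Delta Gam Om q) * (Gam q)\<^sup>T"
      unfolding Delta_mu_def Om_mu_def S_def P1_def using False k q by simp
    have "Delta Gam Om k - Delta_mu m Gam Om \<mu> k = (Om (q + 1) - \<mu> \<cdot>\<^sub>m 1\<^sub>m m) - Gam q * S * (Gam q)\<^sup>T"
      unfolding dk dmk by (rule add_shift) (use Ok Gq cS iD in auto)
    also have "\<dots> = Dd - Q\<^sup>T * (minv P1 * Q)" unfolding QPQ Dd_def using Gq cS by (simp add: mm)
    finally show ?thesis .
  qed
  have Mk: "T_mat m Gam Om k - \<mu> \<cdot>\<^sub>m 1\<^sub>m (k * m) = M" unfolding M_def q(2) ..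
  show ?thesis unfolding ce Mk using sc blkM by simp
qed

lemma noteig_inv:
  fixes T :: "real mat"
  assumes T: "T \<in> carrier_mat N N" and ne: "\<not> eigenvalue T \<mu>"
  shows "invertible_mat (T - \<mu> \<cdot>\<^sub>m 1\<^sub>m N)"
proof -
  have e: "T - \<mu> \<cdot>\<^sub>m 1\<^sub>m N = char_matrix T \<mu>"
    unfolding char_matrix_def using T by (intro eq_matI) auto
  have "det (char_matrix T \<mu>) \<noteq> 0" using ne eigenvalue_det[OF T] by simp
  then show ?thesis unfolding e using inv_det[of "char_matrix T \<mu>" N] T by auto
qed



locale bl =
  fixes n m k :: nat and A B X0 :: "real mat" and V Gam Om :: "nat \<Rightarrow> real mat"
  assumes Apos: "sym_pos_def n A" and Bc: "B \<in> carrier_mat n m" and X0c: "X0 \<in> carrier_mat n m"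
    and lanczos: "is_block_lanczos n m A (bcg_R A B X0 0) V Gam Om k"
    and R_rank: "\<forall>j \<le> k. full_col_rank (bcg_R A B X0 j)"
begin

abbreviation "R \<equiv> bcg_R A B X0"
abbreviation "P \<equiv> bcg_P A B X0"
abbreviation "Ups \<equiv> bcg_Ups A B X0"
abbreviation "Xi \<equiv> bcg_Xi A B X0"

lemma Ac: "A \<in> carrier_mat n n" and Asym: "A\<^sup>T = A"
  using Apos unfolding sym_pos_def_def by auto

lemma R0: "R 0 = B - A * X0" "P 0 = B - A * X0"
  by (simp_all add: bcg_R_def bcg_P_def)

lemma R0c: "R 0 \<in> carrier_mat n m"
  unfolding R0 by (rule minus_carrier_mat, rule mult_carrier_mat[OF Ac X0c])

lemma bcg_Suc: "R (Suc j) = R j - A * P j * Ups j"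
  "P (Suc j) = R (Suc j) + P j * Xi (Suc j)"
  by (cases "bcg A B X0 j"; simp add: bcg_R_def bcg_P_def bcg_Ups_def bcg_Xi_def Let_def)+

lemma V0: "V 0 = 0\<^sub>m n m" and V1c: "V 1 \<in> carrier_mat n m" and G0c: "Gam 0 \<in> carrier_mat m m"
  and VV1: "(V 1)\<^sup>T * V 1 = 1\<^sub>m m" and V1G0: "V 1 * Gam 0 = R 0"
  using lanczos unfolding is_block_lanczos_def by blast+

lemma lz:
  assumes "1 \<le> j" "j \<le> k"
  shows "Om j = (V j)\<^sup>T * (A * V j - V (j - 1) * (Gam (j - 1))\<^sup>T)"
    "V (j + 1) \<in> carrier_mat n m" "Gam j \<in> carrier_mat m m"
    "(V (j + 1))\<^sup>T * V (j + 1) = 1\<^sub>m m"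
    "V (j + 1) * Gam j = (A * V j - V (j - 1) * (Gam (j - 1))\<^sup>T) - V j * Om j"
proof -
  have L: "\<forall>j. 1 \<le> j \<and> j \<le> k \<longrightarrow>
        (let W = A * V j - V (j - 1) * (Gam (j - 1))\<^sup>T in
           Om j = (V j)\<^sup>T * W \<and>
           V (j + 1) \<in> carrier_mat n m \<and> Gam j \<in> carrier_mat m m \<and> upper_triangular (Gam j) \<and>
           (V (j + 1))\<^sup>T * V (j + 1) = 1\<^sub>m m \<and>
           V (j + 1) * Gam j = W - V j * Om j)"
    using lanczos unfolding is_block_lanczos_def by blast
  have "let W = A * V j - V (j - 1) * (Gam (j - 1))\<^sup>T in
           Om j = (V j)\<^sup>T * W \<and>
           V (j + 1) \<in> carrier_mat n m \<and> Gam j \<in> carrier_mat m m \<and> upper_triangular (Gam j) \<and>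
           (V (j + 1))\<^sup>T * V (j + 1) = 1\<^sub>m m \<and>
           V (j + 1) * Gam j = W - V j * Om j" by (rule mp[OF spec[OF L, of j]]) (use assms in simp)
  then show "Om j = (V j)\<^sup>T * (A * V j - V (j - 1) * (Gam (j - 1))\<^sup>T)"
    "V (j + 1) \<in> carrier_mat n m" "Gam j \<in> carrier_mat m m"
    "(V (j + 1))\<^sup>T * V (j + 1) = 1\<^sub>m m"
    "V (j + 1) * Gam j = (A * V j - V (j - 1) * (Gam (j - 1))\<^sup>T) - V j * Om j"
    unfolding Let_def by blast+
qed


lemma Vc: "j \<le> k + 1 \<Longrightarrow> V j \<in> carrier_mat n m"
proof -
  assume j: "j \<le> k + 1"
  consider "j = 0" | "j = 1" | "j \<ge> 2" by linarith
  then show ?thesis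
  proof cases
    case 1 then show ?thesis using V0 by simp
  next
    case 2 then show ?thesis using V1c by simp
  next
    case 3
    then have "1 \<le> j - 1" "j - 1 \<le> k" "j - 1 + 1 = j" using j by auto
    then show ?thesis using lz(2)[of "j - 1"] by metis
  qed
qed

lemma Gc: "j \<le> k \<Longrightarrow> Gam j \<in> carrier_mat m m"
proof -
  assume j: "j \<le> k"
  show ?thesis
  proof (cases "j = 0")
    case True then show ?thesis using G0c by simp
  next
    case False then show ?thesis using lz(3)[of j] j by simp
  qed
qed

lemma Omc: assumes "1 \<le> j" "j \<le> k" shows "Om j \<in> carrier_mat m m"
proof -
  have c: "V j \<in> carrier_mat n m" "V (j - 1) \<in> carrier_mat n m" "Gam (j - 1) \<in> carrier_mat m m"
    using Vc Gc assms by auto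
  show ?thesis unfolding lz(1)[OF assms]
    by (rule mult_carrier_mat[of _ m n], use c in simp, rule minus_carrier_mat) (use c in simp)
qed

lemma AV: assumes "1 \<le> j" "j \<le> k"
  shows "A * V j = V (j + 1) * Gam j + V j * Om j + V (j - 1) * (Gam (j - 1))\<^sup>T"
proof -
  have c: "V (j+1) \<in> carrier_mat n m" "V j \<in> carrier_mat n m" "V (j - 1) \<in> carrier_mat n m"
    "Gam j \<in> carrier_mat m m" "Gam (j - 1) \<in> carrier_mat m m" "Om j \<in> carrier_mat m m"
    using assms Vc Gc Omc by auto
  show ?thesis
    by (rule add_rearr[OF _ _ _ _ lz(5)[OF assms]]) (use c Ac in auto)
qed


abbreviation "Z \<equiv> Zv V Gam Om"
abbreviation "Dl \<equiv> Delta Gam Om"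
abbreviation "Pb \<equiv> Pi_blk Gam Om"
abbreviation "Ph \<equiv> Phi Gam Om"

definition orth :: "nat \<Rightarrow> bool" where
  "orth p \<longleftrightarrow> (\<forall>i l. 1 \<le> i \<longrightarrow> i \<le> p \<longrightarrow> 1 \<le> l \<longrightarrow> l \<le> p \<longrightarrow>
      (V i)\<^sup>T * V l = (if i = l then 1\<^sub>m m else 0\<^sub>m m m))"

definition dgood :: "nat \<Rightarrow> bool" where
  "dgood p \<longleftrightarrow> (\<forall>i. 1 \<le> i \<longrightarrow> i \<le> p \<longrightarrow> Dl i \<in> carrier_mat m m \<and> (Dl i)\<^sup>T = Dl i \<and> invertible_mat (Dl i))"

lemma dgood_mono: "dgood p \<Longrightarrow> q \<le> p \<Longrightarrow> dgood q"
  unfolding dgood_def by auto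

lemma dgoodD: assumes "dgood p" "1 \<le> i" "i \<le> p"
  shows "Dl i \<in> carrier_mat m m" "(Dl i)\<^sup>T = Dl i" "invertible_mat (Dl i)"
    "minv (Dl i) \<in> carrier_mat m m" "Dl i * minv (Dl i) = 1\<^sub>m m" "minv (Dl i) * Dl i = 1\<^sub>m m"
    "(minv (Dl i))\<^sup>T = minv (Dl i)"
proof -
  show D: "Dl i \<in> carrier_mat m m" "(Dl i)\<^sup>T = Dl i" "invertible_mat (Dl i)"
    using assms unfolding dgood_def by auto
  show "minv (Dl i) \<in> carrier_mat m m" "Dl i * minv (Dl i) = 1\<^sub>m m" "minv (Dl i) * Dl i = 1\<^sub>m m"
    using minv_props[OF D(1,3)] by auto
  show "(minv (Dl i))\<^sup>T = minv (Dl i)"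
    using inv_transpose(2)[OF D(1,3)] D(2) by simp
qed

lemma Pbc: assumes "dgood p" "1 \<le> i" "i \<le> p" "i \<le> k"
  shows "Pb i \<in> carrier_mat m m" "(Pb i)\<^sup>T = minv (Dl i) * (Gam i)\<^sup>T"
proof -
  note d = dgoodD[OF assms(1-3)]
  have G: "Gam i \<in> carrier_mat m m" using Gc assms by auto
  show "Pb i \<in> carrier_mat m m" unfolding Pi_blk_def using d G by auto
  show "(Pb i)\<^sup>T = minv (Dl i) * (Gam i)\<^sup>T" unfolding Pi_blk_def using d G by (simp add: mm)
qed

lemma Zc: "1 \<le> i \<Longrightarrow> i \<le> k + 1 \<Longrightarrow> dgood (i - 1) \<Longrightarrow> Z i \<in> carrier_mat n m"
proof (induction i)
  case 0 then show ?case by simp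
next
  case (Suc i)
  show ?case
  proof (cases "i = 0")
    case True then show ?thesis using V1c by simp
  next
    case False
    then have i: "1 \<le> i" "i \<le> k" using Suc.prems by auto
    have Zi: "Z i \<in> carrier_mat n m" using Suc.IH i Suc.prems dgood_mono by auto
    have "Pb i \<in> carrier_mat m m" using Pbc[OF Suc.prems(3)] i by auto
    then have "Z i * (Pb i)\<^sup>T \<in> carrier_mat n m" using Zi by auto
    then show ?thesis using Zv_Suc[OF i(1), of V Gam Om] minus_carrier_mat by (metis Suc_eq_plus1)
  qed
qed

lemma Zorth: "1 \<le> i \<Longrightarrow> i \<le> k + 1 \<Longrightarrow> dgood (i - 1) \<Longrightarrow> X \<in> carrier_mat n c \<Longrightarrow>
   (\<forall>l. 1 \<le> l \<longrightarrow> l \<le> i \<longrightarrow> (V l)\<^sup>T * X = 0\<^sub>m m c) \<Longrightarrow> (Z i)\<^sup>T * X = 0\<^sub>m m c"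
proof (induction i)
  case 0 then show ?case by simp
next
  case (Suc i)
  show ?case
  proof (cases "i = 0")
    case True then show ?thesis using Suc.prems by simp
  next
    case False
    then have i: "1 \<le> i" "i \<le> k" using Suc.prems by auto
    have Zi: "Z i \<in> carrier_mat n m" using Zc i Suc.prems dgood_mono by auto
    have IH: "(Z i)\<^sup>T * X = 0\<^sub>m m c" using Suc.IH i Suc.prems dgood_mono by auto
    have P: "Pb i \<in> carrier_mat m m" using Pbc[OF Suc.prems(3)] i by auto
    have Vi: "V (i + 1) \<in> carrier_mat n m" using Vc i by auto
    have "(Z (Suc i))\<^sup>T * X = (V (i+1))\<^sup>T * X - Pb i * ((Z i)\<^sup>T * X)"
      using Zv_Suc[OF i(1), of V Gam Om] Zi P Vi Suc.prems(4) by (simp add: mm)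
    also have "\<dots> = 0\<^sub>m m c" using IH Suc.prems(5) P i by (simp add: zero_minus_zero)
    finally show ?thesis .
  qed
qed

lemma ZV: assumes "1 \<le> i" "i \<le> k + 1" "dgood (i - 1)" "orth i"
  shows "(Z i)\<^sup>T * V i = 1\<^sub>m m"
proof (cases "i = 1")
  case True then show ?thesis using VV1 by simp
next
  case False
  then have i: "1 \<le> i - 1" "i - 1 \<le> k" "i - 1 + 1 = i" using assms by auto
  have Zi: "Z (i - 1) \<in> carrier_mat n m" using Zc i assms dgood_mono by auto
  have P: "Pb (i - 1) \<in> carrier_mat m m" using Pbc[OF assms(3)] i by auto
  have Vi: "V i \<in> carrier_mat n m" using Vc assms by auto
  have o: "\<forall>l. 1 \<le> l \<longrightarrow> l \<le> i - 1 \<longrightarrow> (V l)\<^sup>T * V i = 0\<^sub>m m m"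
    using assms(4) unfolding orth_def by auto
  have Z0: "(Z (i - 1))\<^sup>T * V i = 0\<^sub>m m m"
    by (rule Zorth) (use i assms dgood_mono Vi o in auto)
  have "(Z i)\<^sup>T * V i = (V i)\<^sup>T * V i - Pb (i - 1) * ((Z (i - 1))\<^sup>T * V i)"
    using Zv_Suc[OF i(1), of V Gam Om] Zi P Vi i(3) by (simp add: mm)
  also have "\<dots> = 1\<^sub>m m" using Z0 P assms(4) assms(1) unfolding orth_def by (auto intro!: eq_matI)
  finally show ?thesis .
qed


lemma AZ: "1 \<le> i \<Longrightarrow> i \<le> k \<Longrightarrow> dgood (i - 1) \<Longrightarrow> A * Z i = V i * Dl i + V (i + 1) * Gam i"
proof (induction i)
  case 0 then show ?case by simp
next
  case (Suc i)
  show ?case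
  proof (cases "i = 0")
    case True
    have c: "V 1 \<in> carrier_mat n m" "V 2 \<in> carrier_mat n m" "Gam 1 \<in> carrier_mat m m" "Om 1 \<in> carrier_mat m m"
      "Gam 0 \<in> carrier_mat m m"
      using Vc Gc Omc Suc.prems True by auto
    have "A * Z (Suc i) = A * V 1" using True by simp
    also have "\<dots> = V 2 * Gam 1 + V 1 * Om 1 + V 0 * (Gam 0)\<^sup>T" using AV[of 1] Suc.prems True by (simp add: numeral_2_eq_2)
    also have "\<dots> = V 1 * Om 1 + V 2 * Gam 1" using c V0 by (auto intro!: eq_matI)
    finally show ?thesis using True by (simp add: numeral_2_eq_2)
  next
    case False
    then have i: "1 \<le> i" "i \<le> k" "i + 1 \<le> k" using Suc.prems by auto
    have dg: "dgood (i - 1)" using Suc.prems dgood_mono by auto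
    note d = dgoodD[OF Suc.prems(3) i(1)]
    have Zi: "Z i \<in> carrier_mat n m" using Zc i dg by auto
    have IH: "A * Z i = V i * Dl i + V (i + 1) * Gam i" using Suc.IH i dg by auto
    have c: "V i \<in> carrier_mat n m" "V (i+1) \<in> carrier_mat n m" "V (i+2) \<in> carrier_mat n m"
      "Gam i \<in> carrier_mat m m" "Gam (i+1) \<in> carrier_mat m m" "Om (i+1) \<in> carrier_mat m m"
      using Vc Gc Omc i by auto
    have PT: "(Pb i)\<^sup>T = minv (Dl i) * (Gam i)\<^sup>T" using Pbc[OF Suc.prems(3)] i by auto
    define X1 where "X1 = V (i+2) * Gam (i+1)"
    define X2 where "X2 = V (i+1) * Om (i+1)"
    define X3 where "X3 = V i * (Gam i)\<^sup>T"
    define X4 where "X4 = V (i+1) * (Gam i * (minv (Dl i) * (Gam i)\<^sup>T))"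
    have cX: "X1 \<in> carrier_mat n m" "X2 \<in> carrier_mat n m" "X3 \<in> carrier_mat n m" "X4 \<in> carrier_mat n m"
      unfolding X1_def X2_def X3_def X4_def using c d by auto
    have e1: "A * Z (Suc i) = A * V (i+1) - (A * Z i) * (minv (Dl i) * (Gam i)\<^sup>T)"
      using Zv_Suc[OF i(1), of V Gam Om] PT Zi c d Ac by (simp add: mm)
    have AVi: "A * V (i+1) = X1 + X2 + X3"
      unfolding X1_def X2_def X3_def using AV[of "i+1"] i by simp
    have e2: "(A * Z i) * (minv (Dl i) * (Gam i)\<^sup>T) = X3 + X4"
      unfolding IH X3_def X4_def using c d by (simp add: mm cancel1[OF d(5)])
    have "A * Z (Suc i) = (X1 + X2 + X3) - (X3 + X4)" using e1 AVi e2 by simp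
    also have "\<dots> = (X2 - X4) + X1" by (rule add4[OF cX])
    also have "\<dots> = V (i+1) * Dl (i+1) + V (i+2) * Gam (i+1)"
      unfolding X1_def X2_def X4_def Delta_Suc[OF i(1), of Gam Om] using c d by (simp add: mm)
    finally show ?thesis by simp
  qed
qed

lemma orth_step0:
  assumes p: "1 \<le> p" "p \<le> k" and o: "orth p" and l: "1 \<le> l" "l \<le> p"
  shows "(V l)\<^sup>T * (V (p + 1) * Gam p) = 0\<^sub>m m m"
proof -
  have c: "V l \<in> carrier_mat n m" "V p \<in> carrier_mat n m" "V (p - 1) \<in> carrier_mat n m"
    "Gam (p - 1) \<in> carrier_mat m m" "Om p \<in> carrier_mat m m"
    using Vc Gc Omc p l by auto
  define W where "W = A * V p - V (p - 1) * (Gam (p - 1))\<^sup>T"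
  have cW: "W \<in> carrier_mat n m" unfolding W_def using c Ac by (auto intro!: minus_carrier_mat)
  have e: "(V l)\<^sup>T * (V (p + 1) * Gam p) = (V l)\<^sup>T * W - ((V l)\<^sup>T * V p) * Om p"
    unfolding lz(5)[OF p] W_def[symmetric] using c cW by (simp add: mm)
  show ?thesis
  proof (cases "l = p")
    case True
    have "(V l)\<^sup>T * W = Om p" unfolding W_def True lz(1)[OF p] ..
    moreover have "(V l)\<^sup>T * V p = 1\<^sub>m m" using o p True unfolding orth_def by auto
    ultimately show ?thesis unfolding e using c by (auto intro!: eq_matI)
  next
    case False
    then have lp: "l < p" using l by auto
    have o1: "(V l)\<^sup>T * V p = 0\<^sub>m m m" using o p l lp unfolding orth_def by auto
    have o2: "(V (l - 1))\<^sup>T * V p = 0\<^sub>m m m"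
    proof (cases "l = 1")
      case True then show ?thesis using V0 c by (auto intro!: eq_matI)
    next
      case False then show ?thesis using o p l lp unfolding orth_def by auto
    qed
    have o3: "(V (l + 1))\<^sup>T * V p = (if l + 1 = p then 1\<^sub>m m else 0\<^sub>m m m)"
      using o p l lp unfolding orth_def by auto
    have o4: "(V l)\<^sup>T * V (p - 1) = (if l = p - 1 then 1\<^sub>m m else 0\<^sub>m m m)"
      using o p l lp unfolding orth_def by auto
    have cl: "V (l + 1) \<in> carrier_mat n m" "V (l - 1) \<in> carrier_mat n m" "Gam l \<in> carrier_mat m m"
      "Gam (l - 1) \<in> carrier_mat m m" "Om l \<in> carrier_mat m m"
      using Vc Gc Omc p l lp by auto
    have "(V l)\<^sup>T * (A * V p) = (A * V l)\<^sup>T * V p"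
      using c Ac Asym by (simp add: mm)
    also have "\<dots> = (Gam l)\<^sup>T * ((V (l + 1))\<^sup>T * V p) + (Om l)\<^sup>T * ((V l)\<^sup>T * V p)
        + Gam (l - 1) * ((V (l - 1))\<^sup>T * V p)"
      unfolding AV[of l, OF l(1) order.trans[OF less_imp_le[OF lp] p(2)]] using c cl by (simp add: mm)
    also have "\<dots> = (if l + 1 = p then (Gam l)\<^sup>T else 0\<^sub>m m m)"
      unfolding o1 o2 o3 using cl by (auto intro!: eq_matI)
    finally have t1: "(V l)\<^sup>T * (A * V p) = (if l + 1 = p then (Gam l)\<^sup>T else 0\<^sub>m m m)" .
    have "(V l)\<^sup>T * W = (V l)\<^sup>T * (A * V p) - ((V l)\<^sup>T * V (p - 1)) * (Gam (p - 1))\<^sup>T"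
      unfolding W_def using c Ac by (simp add: mm)
    also have "\<dots> = 0\<^sub>m m m" unfolding t1 o4 using cl c lp by (auto intro!: eq_matI)
    finally show ?thesis unfolding e o1 using c by (auto intro!: eq_matI)
  qed
qed


lemma Dlc: assumes "1 \<le> i" "i \<le> k" "dgood (i - 1)" shows "Dl i \<in> carrier_mat m m"
proof (cases "i = 1")
  case True then show ?thesis using Omc assms by simp
next
  case False
  then have i: "1 \<le> i - 1" "i - 1 + 1 = i" using assms by auto
  note d = dgoodD[OF assms(3) i(1) order.refl]
  have G: "Gam (i - 1) \<in> carrier_mat m m" using Gc assms(2) by simp
  have "Dl i = Om i - Gam (i - 1) * minv (Dl (i - 1)) * (Gam (i - 1))\<^sup>T"
    using Delta_Suc[OF i(1), of Gam Om] i(2) by simp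
  then show ?thesis using d G by (auto intro!: minus_carrier_mat)
qed

lemma azX: assumes "1 \<le> i" "i \<le> k" "dgood (i - 1)" "X \<in> carrier_mat m c"
  shows "A * (Z i * X) = V i * (Dl i * X) + V (i + 1) * (Gam i * X)"
proof -
  have c: "Z i \<in> carrier_mat n m" "V i \<in> carrier_mat n m" "V (i+1) \<in> carrier_mat n m"
    "Dl i \<in> carrier_mat m m" "Gam i \<in> carrier_mat m m"
    using Zc Vc Gc Dlc assms by auto
  have "A * (Z i * X) = (A * Z i) * X" using c Ac assms by (simp add: mm)
  also have "\<dots> = V i * (Dl i * X) + V (i + 1) * (Gam i * X)"
    unfolding AZ[OF assms(1-3)] using c assms by (simp add: mm)
  finally show ?thesis .
qed

lemma orth_ext:
  assumes p: "1 \<le> p" "p \<le> k" and o: "orth p" and G: "invertible_mat (Gam p)"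
  shows "orth (p + 1)"
proof -
  have c: "V (p+1) \<in> carrier_mat n m" "Gam p \<in> carrier_mat m m" using Vc Gc p by auto
  note g = minv_props[OF c(2) G]
  have z: "(V l)\<^sup>T * V (p + 1) = 0\<^sub>m m m" if l: "1 \<le> l" "l \<le> p" for l
  proof -
    have cl: "V l \<in> carrier_mat n m" using Vc l p by auto
    have "(V l)\<^sup>T * V (p + 1) = ((V l)\<^sup>T * (V (p + 1) * Gam p)) * minv (Gam p)"
      using cl c g by (simp add: mm)
    also have "\<dots> = 0\<^sub>m m m" unfolding orth_step0[OF p o l] using g by simp
    finally show ?thesis .
  qed
  have z2: "(V (p + 1))\<^sup>T * V l = 0\<^sub>m m m" if l: "1 \<le> l" "l \<le> p" for l
  proof -
    have cl: "V l \<in> carrier_mat n m" using Vc l p by auto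
    have "(V (p + 1))\<^sup>T * V l = ((V l)\<^sup>T * V (p + 1))\<^sup>T" using cl c by (simp add: mm)
    also have "\<dots> = 0\<^sub>m m m" unfolding z[OF l] by (auto intro!: eq_matI)
    finally show ?thesis .
  qed
  show ?thesis unfolding orth_def
  proof (intro allI impI)
    fix i l assume il: "1 \<le> i" "i \<le> p + 1" "1 \<le> l" "l \<le> p + 1"
    consider "i \<le> p" "l \<le> p" | "i = p + 1" "l \<le> p" | "i \<le> p" "l = p + 1" | "i = p + 1" "l = p + 1"
      using il by linarith
    then show "(V i)\<^sup>T * V l = (if i = l then 1\<^sub>m m else 0\<^sub>m m m)"
    proof cases
      case 1 then show ?thesis using o il unfolding orth_def by auto
    next
      case 2 then show ?thesis using z2 il by auto
    next
      case 3 then show ?thesis using z il by auto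
    next
      case 4 then show ?thesis using lz(4)[OF p] by simp
    qed
  qed
qed

definition sg :: "nat \<Rightarrow> real" where "sg j = (-1) ^ j"

lemma sg_sq: "sg j * sg j = 1" unfolding sg_def by (simp add: power_mult_distrib[symmetric])
lemma sg_Suc: "sg (j + 1) = - sg j" unfolding sg_def by simp
lemma sg_nz: "sg j \<noteq> 0" unfolding sg_def by simp

definition good :: "nat \<Rightarrow> bool" where
  "good j \<longleftrightarrow> orth (j + 1) \<and> dgood j \<and>
     (\<forall>i \<le> j. Ph i \<in> carrier_mat m m \<and> invertible_mat (Ph i) \<and> invertible_mat (Gam i)) \<and>
     R j = sg j \<cdot>\<^sub>m (V (j + 1) * Ph j) \<and> P j = sg j \<cdot>\<^sub>m (Z (j + 1) * Ph j) \<and>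
     (\<forall>i < j. Ups i = minv (Ph i) * minv (Dl (i + 1)) * Ph i)"

lemma good0: "good 0"
proof -
  have e: "R 0 = sg 0 \<cdot>\<^sub>m (V 1 * Ph 0)" using V1G0 by (simp add: sg_def sm_one)
  have i: "invertible_mat (Ph 0)"
    by (rule kernel_inv[OF e sg_nz _ V1c]) (use R_rank G0c in auto)
  have o: "orth 1" unfolding orth_def using VV1 by auto
  show ?thesis unfolding good_def using e i o G0c R0 by (auto simp: dgood_def)
qed


lemma good_step:
  assumes g: "good j" and jk: "j + 1 \<le> k"
  shows "good (j + 1)"
proof -
  define p where "p = j + 1"
  have p: "1 \<le> p" "p \<le> k" "p - 1 = j" using jk unfolding p_def by auto
  have o: "orth p" and dg: "dgood j" and ph: "\<forall>i \<le> j. Ph i \<in> carrier_mat m m \<and> invertible_mat (Ph i) \<and> invertible_mat (Gam i)"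
    and Rj: "R j = sg j \<cdot>\<^sub>m (V p * Ph j)" and Pj: "P j = sg j \<cdot>\<^sub>m (Z p * Ph j)"
    and Uprev: "\<forall>i < j. Ups i = minv (Ph i) * minv (Dl (i + 1)) * Ph i"
    using g unfolding good_def p_def by auto
  have dg': "dgood (p - 1)" using dg p by simp
  have Phc: "Ph j \<in> carrier_mat m m" and Phi: "invertible_mat (Ph j)" using ph by auto
  note ip = minv_props[OF Phc Phi]
  have c: "V p \<in> carrier_mat n m" "V (p + 1) \<in> carrier_mat n m" "Gam p \<in> carrier_mat m m"
    "Z p \<in> carrier_mat n m" "Dl p \<in> carrier_mat m m"
    using Vc Gc Zc Dlc p dg' by auto
  have ZVp: "(Z p)\<^sup>T * V p = 1\<^sub>m m" using ZV p dg' o by auto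
  have VZp: "(V p)\<^sup>T * Z p = 1\<^sub>m m"
  proof -
    have "(V p)\<^sup>T * Z p = ((Z p)\<^sup>T * V p)\<^sup>T" using c by (simp add: mm)
    then show ?thesis using ZVp by simp
  qed
  have zo: "(Z p)\<^sup>T * (V (p + 1) * Gam p) = 0\<^sub>m m m"
    by (rule Zorth) (use p dg' c orth_step0[OF p(1,2) o] in auto)
  have zAz: "(Z p)\<^sup>T * (A * Z p) = Dl p"
  proof -
    have "(Z p)\<^sup>T * (A * Z p) = ((Z p)\<^sup>T * V p) * Dl p + (Z p)\<^sup>T * (V (p + 1) * Gam p)"
      unfolding AZ[OF p(1,2) dg'] using c by (simp add: mm)
    also have "\<dots> = Dl p" unfolding ZVp zo using c by (auto intro!: eq_matI)
    finally show ?thesis .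
  qed
  have Dsym: "(Dl p)\<^sup>T = Dl p"
  proof -
    have "(Dl p)\<^sup>T = (Z p)\<^sup>T * (A\<^sup>T * Z p)" unfolding zAz[symmetric] using c Ac by (simp add: mm)
    then show ?thesis using Asym zAz by simp
  qed
  have Dinv: "invertible_mat (Dl p)"
    using posdef_inv[OF Apos c(4) _ VZp] c zAz by auto
  have dgp: "dgood p" unfolding dgood_def
  proof (intro allI impI)
    fix i assume i: "1 \<le> i" "i \<le> p"
    show "Dl i \<in> carrier_mat m m \<and> (Dl i)\<^sup>T = Dl i \<and> invertible_mat (Dl i)"
    proof (cases "i = p")
      case True then show ?thesis using c Dsym Dinv by simp
    next
      case False then show ?thesis using dg i p unfolding dgood_def by auto
    qed
  qed
  note d = dgoodD[OF dgp p(1) order.refl]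
  have ssq: "sg j * sg j = 1" by (rule sg_sq)
  have RtRj: "(R j)\<^sup>T * R j = (Ph j)\<^sup>T * Ph j"
    by (rule RtR_gen[OF Rj ssq _ c(1) Phc]) (use o p in \<open>auto simp: orth_def\<close>)
  have PAP: "(P j)\<^sup>T * A * P j = (Ph j)\<^sup>T * (Dl p * Ph j)"
  proof -
    have "(P j)\<^sup>T * A * P j = (sg j * sg j) \<cdot>\<^sub>m ((Ph j)\<^sup>T * ((Z p)\<^sup>T * (A * Z p)) * Ph j)"
      unfolding Pj using c Phc Ac by (simp add: mm smsm)
    also have "\<dots> = (Ph j)\<^sup>T * (Dl p * Ph j)" unfolding ssq zAz using Phc c by (simp add: mm sm_one)
    finally show ?thesis .
  qed
  have iPT: "invertible_mat ((Ph j)\<^sup>T)" "minv ((Ph j)\<^sup>T) = (minv (Ph j))\<^sup>T"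
    using inv_transpose[OF Phc Phi] by auto
  have iDP: "invertible_mat (Dl p * Ph j)" "minv (Dl p * Ph j) = minv (Ph j) * minv (Dl p)"
    using inv_mult[OF c(5) Phc Dinv Phi] by auto
  have iPAP: "minv ((Ph j)\<^sup>T * (Dl p * Ph j)) = minv (Ph j) * minv (Dl p) * (minv (Ph j))\<^sup>T"
    using inv_mult(2)[OF _ _ iPT(1) iDP(1)] iPT(2) iDP(2) Phc c by simp
  have TT: "(minv (Ph j))\<^sup>T * (Ph j)\<^sup>T = 1\<^sub>m m"
  proof -
    have "(Ph j * minv (Ph j))\<^sup>T = (minv (Ph j))\<^sup>T * (Ph j)\<^sup>T" by (rule tr_mult) (use ip Phc in simp)
    then show ?thesis using ip by simp
  qed
  have Upsj: "Ups j = minv (Ph j) * minv (Dl (j + 1)) * Ph j"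
  proof -
    have "Ups j = minv ((Ph j)\<^sup>T * (Dl p * Ph j)) * ((Ph j)\<^sup>T * Ph j)"
      unfolding bcg_Ups_def PAP[symmetric] RtRj[symmetric] ..
    also have "\<dots> = minv (Ph j) * minv (Dl (j + 1)) * Ph j"
      unfolding iPAP p_def[symmetric] using ip d Phc by (simp add: mm cancel1[OF TT])
    finally show ?thesis .
  qed
  define Phn where "Phn = Ph (j + 1)"
  have Phn_eq2: "Phn = Pb p * Ph j" unfolding Phn_def p_def by simp
  have Phn_eq: "Phn = Gam p * (minv (Dl p) * Ph j)"
    unfolding Phn_eq2 Pi_blk_def using c d Phc by (simp add: mm)
  have Phnc: "Phn \<in> carrier_mat m m" unfolding Phn_eq using c d Phc by auto
  define Y where "Y = V (p + 1) * (Gam p * (minv (Dl p) * Ph j))"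
  have cY: "Y \<in> carrier_mat n m" "V p * Ph j \<in> carrier_mat n m" unfolding Y_def using c d Phc by auto
  have APU: "A * P j * Ups j = sg j \<cdot>\<^sub>m (V p * Ph j + Y)"
  proof -
    have "A * P j * Ups j = sg j \<cdot>\<^sub>m (A * (Z p * (minv (Dl p) * Ph j)))"
      unfolding Pj Upsj p_def[symmetric] using Ac c d ip Phc by (simp add: mm cancel1[OF ip(2)])
    also have "\<dots> = sg j \<cdot>\<^sub>m (V p * (Dl p * (minv (Dl p) * Ph j)) + V (p + 1) * (Gam p * (minv (Dl p) * Ph j)))"
      by (subst azX[OF p(1,2) dg']) (use d Phc in auto)
    also have "\<dots> = sg j \<cdot>\<^sub>m (V p * Ph j + Y)"
      unfolding Y_def
      using c d Phc ip by (simp add: mm cancel1[OF d(5)])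
    finally show ?thesis .
  qed
  have Rn: "R (j + 1) = sg (j + 1) \<cdot>\<^sub>m (V (p + 1) * Phn)"
  proof -
    have "R (j + 1) = sg j \<cdot>\<^sub>m (V p * Ph j) - sg j \<cdot>\<^sub>m (V p * Ph j + Y)"
      using bcg_Suc(1)[of j] Rj APU by simp
    also have "\<dots> = (- sg j) \<cdot>\<^sub>m Y" by (rule lin1[OF cY(2) cY(1)])
    also have "\<dots> = sg (j + 1) \<cdot>\<^sub>m (V (p + 1) * Phn)" unfolding sg_Suc Y_def Phn_eq ..
    finally show ?thesis .
  qed
  have Phni: "invertible_mat Phn"
    by (rule kernel_inv[OF Rn sg_nz _ c(2) Phnc]) (use R_rank jk in auto)
  have Gi: "invertible_mat (Gam p)"
    using inv_factors(1)[of "Gam p" m "minv (Dl p) * Ph j"] Phni Phn_eq c d Phc by auto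
  have o2: "orth (p + 1)" by (rule orth_ext[OF p(1,2) o Gi])
  have ssq2: "sg (j+1) * sg (j+1) = 1" by (rule sg_sq)
  have RtRn: "(R (j + 1))\<^sup>T * R (j + 1) = Phn\<^sup>T * Phn"
    by (rule RtR_gen[OF Rn ssq2 _ c(2) Phnc]) (use o2 p in \<open>auto simp: orth_def\<close>)
  have iPTP: "minv ((Ph j)\<^sup>T * Ph j) = minv (Ph j) * (minv (Ph j))\<^sup>T"
    using inv_mult(2)[OF _ Phc iPT(1) Phi] iPT(2) Phc by simp
  have Xin: "Xi (j + 1) = minv (Ph j) * ((minv (Ph j))\<^sup>T * (Phn\<^sup>T * Phn))"
    unfolding bcg_Xi_def RtRn using RtRj iPTP ip Phnc by (simp add: mm)
  have PbT: "(Pb p)\<^sup>T = minv (Dl p) * (Gam p)\<^sup>T" using Pbc[OF dgp p(1) order.refl p(2)] by simp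
  have PXi: "P j * Xi (j + 1) = sg j \<cdot>\<^sub>m (Z p * ((Pb p)\<^sup>T * Phn))"
    unfolding Pj Xin using c d ip Phc Phnc Pbc[OF dgp p(1) order.refl p(2)]
    by (simp add: mm cancel1[OF ip(2)] cancel1[OF TT] Phn_eq2)
  have Zn: "Z (j + 2) = V (p + 1) - Z p * (Pb p)\<^sup>T"
    using Zv_Suc[OF p(1), of V Gam Om] unfolding p_def by simp
  have Pn: "P (j + 1) = sg (j + 1) \<cdot>\<^sub>m (Z (j + 2) * Phn)"
  proof -
    have cc: "V (p + 1) * Phn \<in> carrier_mat n m" "Z p * ((Pb p)\<^sup>T * Phn) \<in> carrier_mat n m"
      using c Phnc Pbc[OF dgp p(1) order.refl p(2)] by auto
    have "P (j + 1) = sg (j + 1) \<cdot>\<^sub>m (V (p + 1) * Phn) + sg j \<cdot>\<^sub>m (Z p * ((Pb p)\<^sup>T * Phn))"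
      using bcg_Suc(2)[of j] Rn PXi by simp
    also have "\<dots> = sg (j + 1) \<cdot>\<^sub>m (V (p + 1) * Phn - Z p * ((Pb p)\<^sup>T * Phn))"
      by (rule lin2[OF cc sg_Suc])
    also have "\<dots> = sg (j + 1) \<cdot>\<^sub>m (Z (j + 2) * Phn)"
      unfolding Zn using c d Phnc Pbc[OF dgp p(1) order.refl p(2)] by (simp add: mm)
    finally show ?thesis .
  qed
  show ?thesis unfolding good_def
  proof (intro conjI)
    show "orth (j + 1 + 1)" using o2 p_def by simp
    show "dgood (j + 1)" using dgp p_def by simp
    show "\<forall>i\<le>j + 1. Ph i \<in> carrier_mat m m \<and> invertible_mat (Ph i) \<and> invertible_mat (Gam i)"
    proof (intro allI impI)
      fix i assume "i \<le> j + 1"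
      then consider "i \<le> j" | "i = j + 1" by linarith
      then show "Ph i \<in> carrier_mat m m \<and> invertible_mat (Ph i) \<and> invertible_mat (Gam i)"
      proof cases
        case 1 then show ?thesis using ph by auto
      next
        case 2 then show ?thesis using Phnc Phni Gi unfolding Phn_def p_def by simp
      qed
    qed
    show "R (j + 1) = sg (j + 1) \<cdot>\<^sub>m (V (j + 1 + 1) * Ph (j + 1))" using Rn unfolding Phn_def p_def .
    show "P (j + 1) = sg (j + 1) \<cdot>\<^sub>m (Z (j + 1 + 1) * Ph (j + 1))" using Pn unfolding Phn_def
      by (simp add: numeral_2_eq_2)
    show "\<forall>i<j + 1. Ups i = minv (Ph i) * minv (Dl (i + 1)) * Ph i"
      using Uprev Upsj less_Suc_eq by auto
  qed
qed


lemma good_all: "j \<le> k \<Longrightarrow> good j"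
proof (induction j)
  case 0 then show ?case using good0 by simp
next
  case (Suc j) then show ?case using good_step[of j] by simp
qed

lemma RtR: assumes "good j" "j \<le> k" shows "(R j)\<^sup>T * R j = (Ph j)\<^sup>T * Ph j"
proof -
  have g: "orth (j + 1)" "R j = sg j \<cdot>\<^sub>m (V (j + 1) * Ph j)" "Ph j \<in> carrier_mat m m"
    using assms unfolding good_def by auto
  have VV: "(V (j + 1))\<^sup>T * V (j + 1) = 1\<^sub>m m" using g(1) unfolding orth_def by auto
  have Vj: "V (j + 1) \<in> carrier_mat n m" using Vc assms(2) by auto
  show ?thesis by (rule RtR_gen[OF g(2) sg_sq VV Vj g(3)])
qed

lemma Dmu_c: assumes "1 \<le> j" "j \<le> k + 1" "dgood k"
  shows "Delta_mu m Gam Om \<mu> j \<in> carrier_mat m m"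
proof (cases "j \<le> 1")
  case True then show ?thesis unfolding Delta_mu_def by simp
next
  case False
  then have j: "1 \<le> j - 1" "j - 1 \<le> k" using assms by auto
  note d = dgoodD[OF assms(3) j]
  have G: "Gam (j - 1) \<in> carrier_mat m m" using Gc j by auto
  show ?thesis unfolding Delta_mu_def using False d G by (auto intro!: minus_carrier_mat)
qed

end

theorem theorem5:
  fixes n m k :: nat and A B X0 :: "real mat" and \<mu> :: real
    and V Gam Om :: "nat \<Rightarrow> real mat"
  defines "R \<equiv> bcg_R A B X0"
  defines "Ups \<equiv> bcg_Ups A B X0"
  defines "Xi \<equiv> bcg_Xi A B X0"
  defines "Theta \<equiv> bcg_Theta A B X0"
  defines "Ups\<^sub>\<mu> \<equiv> Ups_mu m Gam Om \<mu>"
  defines "Theta\<^sub>\<mu> \<equiv> (\<lambda>j. ((R j)\<^sup>T * R j) * Ups\<^sub>\<mu> j)"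
  assumes k: "k \<ge> 1"
    and A: "sym_pos_def n A"
    and B: "B \<in> carrier_mat n m" and X0: "X0 \<in> carrier_mat n m"
    and lanczos: "is_block_lanczos n m A (R 0) V Gam Om k"
    and krylov: "\<forall>j. 1 \<le> j \<and> j \<le> k + 1 \<longrightarrow> full_col_rank (krylov_mat A (R 0) j)"
    and R_rank: "\<forall>j \<le> k. full_col_rank (R j)"
    and not_eig: "\<forall>j. 1 \<le> j \<and> j \<le> k \<longrightarrow> \<not> eigenvalue (T_mat m Gam Om j) \<mu>"
    and Dmu_inv: "\<forall>j. 1 \<le> j \<and> j \<le> k + 1 \<longrightarrow> invertible_mat (Delta_mu m Gam Om \<mu> j)"
  shows "Ups\<^sub>\<mu> 0 = (1 / \<mu>) \<cdot>\<^sub>m 1\<^sub>m m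
    \<and> invertible_mat (\<mu> \<cdot>\<^sub>m (Ups\<^sub>\<mu> (k - 1) - Ups (k - 1)) + Xi k)
    \<and> Ups\<^sub>\<mu> k = minv (\<mu> \<cdot>\<^sub>m (Ups\<^sub>\<mu> (k - 1) - Ups (k - 1)) + Xi k) * (Ups\<^sub>\<mu> (k - 1) - Ups (k - 1))
    \<and> invertible_mat (\<mu> \<cdot>\<^sub>m (Theta\<^sub>\<mu> (k - 1) - Theta (k - 1)) + (R k)\<^sup>T * R k)
    \<and> Ups\<^sub>\<mu> k = minv (\<mu> \<cdot>\<^sub>m (Theta\<^sub>\<mu> (k - 1) - Theta (k - 1)) + (R k)\<^sup>T * R k)
                   * (Theta\<^sub>\<mu> (k - 1) - Theta (k - 1))"
proof -
  have Rd: "R = bcg_R A B X0" using R_def by simp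
  interpret bl n m k A B X0 V Gam Om
    using A B X0 lanczos R_rank unfolding Rd by unfold_locales auto
  have gk: "good k" and gk1: "good (k - 1)" and g0: "good 0" using good_all by auto
  have ok: "dgood k" and phk: "\<forall>i \<le> k. Phi Gam Om i \<in> carrier_mat m m \<and> invertible_mat (Phi Gam Om i) \<and> invertible_mat (Gam i)"
    and upsk: "\<forall>i < k. bcg_Ups A B X0 i = minv (Phi Gam Om i) * minv (Delta Gam Om (i + 1)) * Phi Gam Om i"
    using gk unfolding good_def by auto
  have k1: "k - 1 + 1 = k" using k by simp
  note a = dgoodD[OF ok k order.refl]
  have F0c: "Phi Gam Om (k - 1) \<in> carrier_mat m m" "invertible_mat (Phi Gam Om (k - 1))" using phk by auto
  have F1c: "Phi Gam Om k \<in> carrier_mat m m" "invertible_mat (Phi Gam Om k)" using phk by auto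
  have Gk: "Gam k \<in> carrier_mat m m" using Gc by auto
  have bc: "Delta_mu m Gam Om \<mu> k \<in> carrier_mat m m" using Dmu_c[OF k _ ok] by simp
  have ib: "invertible_mat (Delta_mu m Gam Om \<mu> k)" using Dmu_inv k by auto
  have id: "invertible_mat (Delta_mu m Gam Om \<mu> (k + 1))" using Dmu_inv k by auto
  have Tinv: "\<forall>j. 1 \<le> j \<and> j \<le> k \<longrightarrow> invertible_mat (T_mat m Gam Om j - \<mu> \<cdot>\<^sub>m 1\<^sub>m (j * m))"
    using noteig_inv[OF T_c] not_eig by auto
  have Omc': "\<forall>j. 1 \<le> j \<and> j \<le> k \<longrightarrow> Om j \<in> carrier_mat m m" using Omc by auto
  have Gc': "\<forall>j \<le> k. Gam j \<in> carrier_mat m m" using Gc by auto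
  have Dk1: "2 \<le> k \<longrightarrow> minv (Delta Gam Om (k - 1)) \<in> carrier_mat m m"
    using dgoodD(4)[OF ok] by auto
  note sh = shifted[OF k Tinv Omc' Gc' Dk1]
  have F1eq: "Phi Gam Om k = Gam k * (minv (Delta Gam Om k) * Phi Gam Om (k - 1))"
  proof -
    have "Phi Gam Om k = Pi_blk Gam Om (k - 1 + 1) * Phi Gam Om (k - 1)"
      using k1 Phi.simps(2)[of Gam Om "k - 1"] by simp
    then show ?thesis unfolding k1 Pi_blk_def using Gk a F0c by (simp add: mm)
  qed
  have deq: "Delta_mu m Gam Om \<mu> (k + 1) = \<mu> \<cdot>\<^sub>m 1\<^sub>m m + Gam k * minv (Delta Gam Om k - Delta_mu m Gam Om \<mu> k) * (Gam k)\<^sup>T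
      - Gam k * minv (Delta Gam Om k) * (Gam k)\<^sup>T"
    unfolding Delta_mu_def[of m Gam Om \<mu> "k + 1"] Om_mu_def using k sh by simp
  note fa = final_alg[OF a(1) bc Gk F0c(1) a(2) a(3) ib conjunct1[OF sh] F0c(2) F1c(2) id F1eq deq]
  have U0: "Ups\<^sub>\<mu> (k - 1) = minv (Phi Gam Om (k - 1)) * minv (Delta_mu m Gam Om \<mu> k) * Phi Gam Om (k - 1)"
    unfolding Ups\<^sub>\<mu>_def Ups_mu_def k1 ..
  have Uc: "Ups (k - 1) = minv (Phi Gam Om (k - 1)) * minv (Delta Gam Om k) * Phi Gam Om (k - 1)"
  proof -
    have "k - 1 < k" using k by simp
    from upsk[rule_format, OF this] show ?thesis unfolding Ups_def k1 .
  qed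
  have U1: "Ups\<^sub>\<mu> k = minv (Phi Gam Om k) * minv (Delta_mu m Gam Om \<mu> (k + 1)) * Phi Gam Om k"
    unfolding Ups\<^sub>\<mu>_def Ups_mu_def ..
  have RR0: "(R (k - 1))\<^sup>T * R (k - 1) = (Phi Gam Om (k - 1))\<^sup>T * Phi Gam Om (k - 1)"
    unfolding Rd using RtR[OF gk1] by simp
  have RR1: "(R k)\<^sup>T * R k = (Phi Gam Om k)\<^sup>T * Phi Gam Om k"
    unfolding Rd using RtR[OF gk] by simp
  have Xik: "Xi k = minv ((Phi Gam Om (k - 1))\<^sup>T * Phi Gam Om (k - 1)) * ((Phi Gam Om k)\<^sup>T * Phi Gam Om k)"
    unfolding Xi_def bcg_Xi_def using RR0 RR1 unfolding Rd by simp
  have Th: "Theta (k - 1) = ((Phi Gam Om (k - 1))\<^sup>T * Phi Gam Om (k - 1)) * Ups (k - 1)"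
    unfolding Theta_def bcg_Theta_def Ups_def using RR0 unfolding Rd by simp
  have Thm: "Theta\<^sub>\<mu> (k - 1) = ((Phi Gam Om (k - 1))\<^sup>T * Phi Gam Om (k - 1)) * Ups\<^sub>\<mu> (k - 1)"
    unfolding Theta\<^sub>\<mu>_def using RR0 by simp
  have part0: "Ups\<^sub>\<mu> 0 = (1 / \<mu>) \<cdot>\<^sub>m 1\<^sub>m m"
  proof -
    have G0: "Gam 0 \<in> carrier_mat m m" "invertible_mat (Gam 0)" using phk by auto
    note pG0 = minv_props[OF G0]
    have i1: "invertible_mat (\<mu> \<cdot>\<^sub>m 1\<^sub>m m)" using Dmu_inv unfolding Delta_mu_def by auto
    show ?thesis
    proof (cases "m = 0")
      case True
      have c1: "Ups\<^sub>\<mu> 0 \<in> carrier_mat 0 0"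
        unfolding Ups\<^sub>\<mu>_def Ups_mu_def using pG0 G0 True by auto
      show ?thesis by (rule eq_matI) (use c1 True in auto)
    next
      case False
      have mu: "\<mu> \<noteq> 0"
      proof
        assume "\<mu> = 0"
        then have "(\<mu> \<cdot>\<^sub>m 1\<^sub>m m) * minv (\<mu> \<cdot>\<^sub>m 1\<^sub>m m) = 1\<^sub>m m"
          using minv_props(2)[OF _ i1] by auto
        moreover have "minv (\<mu> \<cdot>\<^sub>m 1\<^sub>m m) \<in> carrier_mat m m" using minv_props(1)[OF _ i1] by auto
        ultimately have "((\<mu> \<cdot>\<^sub>m 1\<^sub>m m) * minv (\<mu> \<cdot>\<^sub>m 1\<^sub>m m)) $$ (0, 0) = 1\<^sub>m m $$ (0, 0)" by simp
        then show False using False \<open>\<mu> = 0\<close> \<open>minv (\<mu> \<cdot>\<^sub>m 1\<^sub>m m) \<in> carrier_mat m m\<close>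
          by (simp add: scalar_prod_def)
      qed
      have e: "(\<mu> \<cdot>\<^sub>m 1\<^sub>m m) * ((1 / \<mu>) \<cdot>\<^sub>m 1\<^sub>m m) = 1\<^sub>m m"
        using mu by (simp add: mm smsm sm_one)
      have mi: "minv (\<mu> \<cdot>\<^sub>m 1\<^sub>m m) = (1 / \<mu>) \<cdot>\<^sub>m 1\<^sub>m m"
        using inv_right_to_minv(2)[OF _ _ e] by auto
      show ?thesis unfolding Ups\<^sub>\<mu>_def Ups_mu_def Delta_mu_def using mi pG0 G0 by (simp add: mm)
    qed
  qed
  show ?thesis
    unfolding U0 Uc U1 Xik Th Thm RR1 using part0 fa by blast
qed


end
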